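(* Let $R$ be an irreducible root lattice of type $A_n$, $D_n$ $(n\ge4)$, $E_6$, $E_7$ or $E_8$ with root system $\Phi$, positive roots $\Phi^+$ and Coxeter number $h$, and let $R^*$ be its dual lattice. Let $\gamma+R$ be a coset of $R$ in $R^*$, let $k=\min\{\langle\alpha,\alpha\rangle:\alpha\in\gamma+R\}$, and put \[v=\sum_{\alpha\in\gamma+R,\ \langle\alpha,\alpha\rangle=k} e^{\sqrt2\alpha}\in V_{\sqrt2(\gamma+R)}.\] Then $v$ is a highest weight vector of highest weight $(0,k)$ for $\mathrm{Vir}(s)\otimes\mathrm{Vir}(\tilde\omega)$, that is, $s_jv=\tilde\omega_jv=0$ for all $j\ge2$, $s_1v=0$ and $\tilde\omega_1v=kv$.
   Context: For a positive definite even lattice $N$ whose inner products all lie in $2\mathbb{Z}$ (e.g. $N=\sqrt2R$), $V_N=M(1)\otimes\mathbb{C}[N]$ is the standard lattice vertex operator algebra, where $M(1)=\mathbb{C}[\alpha(n):\alpha\in\mathfrak h,n<0]\cdot 1$ is the Heisenberg Fock space of $\mathfrak h=\mathbb{C}\otimes_{\mathbb{Z}}N$ and $\mathbb{C}[N]$ is the ordinary group algebra with basis $e^{\beta}$, $\beta\in N$ (no cocycle twisting is needed); vertex operators are written $Y(v,z)=\sum_{n\in\mathbb{Z}}v_nz^{-n-1}$. For $\gamma\in R^*$, $V_{\sqrt2(\gamma+R)}=M(1)\otimes\mathrm{span}\{e^{\sqrt2\beta}:\beta\in\gamma+R\}$ is the standard (irreducible) module for $V_{\sqrt2R}$, on which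 the component operators $u_n$ of $u\in V_{\sqrt2R}$ act. The Virasoro element of $V_{\sqrt2R}$ is $\omega=\frac1{2h}\sum_{\alpha\in\Phi^+}\alpha(-1)^2\cdot1$. Define \[s=\frac1{2(h+2)}\sum_{\alpha\in\Phi^+}\big(\alpha(-1)^2\cdot1-2(e^{\sqrt2\alpha}+e^{-\sqrt2\alpha})\big),\qquad \tilde\omega=\omega-s.\] These are mutually orthogonal conformal vectors (i.e. $s_1s=2s$, $\tilde\omega_1\tilde\omega=2\tilde\omega$, $\tilde\omega_1s=0$, and their modes $L(n)=s_{n+1}$, resp. $\tilde\omega_{n+1}$, satisfy Virasoro relations), and $\mathrm{Vir}(s)$, $\mathrm{Vir}(\tilde\omega)$ denote the Virasoro vertex operator algebras they generate. *)

theory Defs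
  imports "HOL-Analysis.Analysis" "HOL-Library.Multiset"
begin

text \<open>Vectors of the ambient Euclidean space R^m are functions nat => real
  supported on the first m coordinates; a Fock space vector is a function from
  monomials (multisets of pairs (i,n), n >= 1, standing for e_i(-n)) to complex
  coefficients; a module vector assigns a Fock vector to each lattice point mu
  (the coefficient of e^mu).\<close>

type_synonym vec = "nat \<Rightarrow> real"
type_synonym fock = "(nat \<times> nat) multiset \<Rightarrow> complex"
type_synonym modl = "vec \<Rightarrow> fock"

definition ip :: "nat \<Rightarrow> vec \<Rightarrow> vec \<Rightarrow> real" where
  "ip m x y = (\<Sum>i<m. x i * y i)"

definition vscale :: "real \<Rightarrow> vec \<Rightarrow> vec" where
  "vscale c x = (\<lambda>i. c * x i)"

definition latA :: "nat \<Rightarrow> vec set" where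
  "latA n = {x. (\<forall>i>n. x i = 0) \<and> (\<forall>i\<le>n. x i \<in> \<int>) \<and> (\<Sum>i\<le>n. x i) = 0}"

definition latD :: "nat \<Rightarrow> vec set" where
  "latD n = {x. (\<forall>i\<ge>n. x i = 0) \<and> (\<forall>i<n. x i \<in> \<int>) \<and> (\<exists>z::int. (\<Sum>i<n. x i) = 2 * of_int z)}"

definition latE8 :: "vec set" where
  "latE8 = latD 8 \<union> {x. (\<forall>i\<ge>8. x i = 0) \<and> (\<forall>i<8. x i - 1/2 \<in> \<int>) \<and> (\<exists>z::int. (\<Sum>i<8. x i) = 2 * of_int z)}"

definition latE7 :: "vec set" where
  "latE7 = {x \<in> latE8. x 6 = x 7}"

definition latE6 :: "vec set" where
  "latE6 = {x \<in> latE8. x 5 = x 6 \<and> x 6 = x 7}"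

datatype rtype = TA nat | TD nat | TE6 | TE7 | TE8

fun adm :: "rtype \<Rightarrow> bool" where
  "adm (TA n) = (n \<ge> 1)"
| "adm (TD n) = (n \<ge> 4)"
| "adm TE6 = True" | "adm TE7 = True" | "adm TE8 = True"

fun amb :: "rtype \<Rightarrow> nat" where
  "amb (TA n) = n + 1" | "amb (TD n) = n" | "amb TE6 = 8" | "amb TE7 = 8" | "amb TE8 = 8"

fun lat :: "rtype \<Rightarrow> vec set" where
  "lat (TA n) = latA n" | "lat (TD n) = latD n" | "lat TE6 = latE6" | "lat TE7 = latE7"
| "lat TE8 = latE8"

fun cox :: "rtype \<Rightarrow> nat" where
  "cox (TA n) = n + 1" | "cox (TD n) = 2 * n - 2" | "cox TE6 = 12" | "cox TE7 = 18"
| "cox TE8 = 30"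

definition in_span :: "vec set \<Rightarrow> vec \<Rightarrow> bool" where
  "in_span R x \<longleftrightarrow> (\<exists>S c. finite S \<and> S \<subseteq> R \<and> x = (\<lambda>i. \<Sum>r\<in>S. c r * r i))"

definition dual :: "nat \<Rightarrow> vec set \<Rightarrow> vec set" where
  "dual m R = {x. in_span R x \<and> (\<forall>r\<in>R. ip m x r \<in> \<int>)}"

definition coset :: "vec \<Rightarrow> vec set \<Rightarrow> vec set" where
  "coset g R = {(\<lambda>i. g i + r i) | r. r \<in> R}"

definition roots :: "nat \<Rightarrow> vec set \<Rightarrow> vec set" where
  "roots m R = {x \<in> R. ip m x x = 2}"

definition posroots :: "rtype \<Rightarrow> vec \<Rightarrow> vec set" where
  "posroots T t = {a \<in> roots (amb T) (lat T). ip (amb T) a t > 0}"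

text \<open>Heisenberg mode alpha(n), n nonzero, on the Fock space, in the orthonormal
  coordinate basis e_i: e_i(-n) multiplies by the variable (i,n),
  e_i(n) = n d/d(i,n) for n > 0.\<close>
definition hbF :: "nat \<Rightarrow> vec \<Rightarrow> int \<Rightarrow> fock \<Rightarrow> fock" where
  "hbF m a n g = (\<lambda>M.
     if n < 0 then (\<Sum>i<m. complex_of_real (a i) *
          (if (i, nat (-n)) \<in># M then g (M - {#(i, nat (-n))#}) else 0))
     else if n > 0 then of_int n * (\<Sum>i<m. complex_of_real (a i) *
          of_nat (count M (i, nat n) + 1) * g (M + {#(i, nat n)#}))
     else 0)"

text \<open>coefficient of z^a in exp(sum_{n>0} beta(-n) z^n / n)\<close>
fun Sop :: "nat \<Rightarrow> vec \<Rightarrow> nat \<Rightarrow> fock \<Rightarrow> fock" where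
  "Sop m b 0 g = g"
| "Sop m b (Suc a) g = (\<lambda>M. (1 / of_nat (Suc a)) *
      (\<Sum>n\<in>{1..Suc a}. hbF m b (- int n) (Sop m b (Suc a - n) g) M))"

text \<open>coefficient of z^(-a) in exp(- sum_{n>0} beta(n) z^(-n) / n)\<close>
fun Top :: "nat \<Rightarrow> vec \<Rightarrow> nat \<Rightarrow> fock \<Rightarrow> fock" where
  "Top m b 0 g = g"
| "Top m b (Suc a) g = (\<lambda>M. (- 1 / of_nat (Suc a)) *
      (\<Sum>n\<in>{1..Suc a}. hbF m b (int n) (Top m b (Suc a - n) g) M))"

definition hbM :: "nat \<Rightarrow> vec \<Rightarrow> int \<Rightarrow> modl \<Rightarrow> modl" where
  "hbM m a n f = (\<lambda>mu. if n = 0 then (\<lambda>M. complex_of_real (ip m a mu) * f mu M)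
                       else hbF m a n (f mu))"

definition nop :: "nat \<Rightarrow> vec \<Rightarrow> int \<Rightarrow> int \<Rightarrow> modl \<Rightarrow> modl" where
  "nop m a p q f = (if p \<le> q then hbM m a p (hbM m a q f) else hbM m a q (hbM m a p f))"

text \<open>component (alpha(-1)^2 1)_j of Y(alpha(-1)^2 1, z) = :alpha(z)^2:
  = sum_j (sum_p :alpha(p) alpha(j-1-p):) z^(-j-1)\<close>
definition hsq :: "nat \<Rightarrow> vec \<Rightarrow> int \<Rightarrow> modl \<Rightarrow> modl" where
  "hsq m a j f = (\<lambda>mu M. infsum (\<lambda>p::int. nop m a p (j - 1 - p) f mu M) UNIV)"

text \<open>component (e^beta)_j of Y(e^beta,z) = E^-(-beta,z) E^+(-beta,z) e^beta z^(beta(0))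
  (no cocycle); on u (x) e^lam it gives
  sum_{a - b = -j-1-<beta,lam>} S_a T_b u (x) e^(beta+lam).\<close>
definition emode :: "nat \<Rightarrow> vec \<Rightarrow> int \<Rightarrow> modl \<Rightarrow> modl" where
  "emode m b j f = (\<lambda>mu M.
     (let lam = (\<lambda>i. mu i - b i); p = ip m b lam in
      if p \<in> \<int> then
        infsum (\<lambda>c::nat. Sop m b (nat (- j - 1 - \<lfloor>p\<rfloor> + int c)) (Top m b c (f lam)) M)
               {c::nat. - j - 1 - \<lfloor>p\<rfloor> + int c \<ge> 0}
      else 0))"

definition smode :: "rtype \<Rightarrow> vec \<Rightarrow> int \<Rightarrow> modl \<Rightarrow> modl" where
  "smode T t j f = (\<lambda>mu M. (1 / (2 * (of_nat (cox T) + 2))) *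
     (\<Sum>a\<in>posroots T t. hsq (amb T) a j f mu M
        - 2 * (emode (amb T) (vscale (sqrt 2) a) j f mu M
               + emode (amb T) (vscale (- sqrt 2) a) j f mu M)))"

definition omode :: "rtype \<Rightarrow> vec \<Rightarrow> int \<Rightarrow> modl \<Rightarrow> modl" where
  "omode T t j f = (\<lambda>mu M. (1 / (2 * of_nat (cox T))) *
     (\<Sum>a\<in>posroots T t. hsq (amb T) a j f mu M))"

definition wtmode :: "rtype \<Rightarrow> vec \<Rightarrow> int \<Rightarrow> modl \<Rightarrow> modl" where
  "wtmode T t j f = (\<lambda>mu M. omode T t j f mu M - smode T t j f mu M)"

definition vac :: fock where
  "vac = (\<lambda>M. if M = {#} then 1 else 0)"

definition vvec :: "rtype \<Rightarrow> vec \<Rightarrow> real \<Rightarrow> modl" where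
  "vvec T g k = (\<lambda>mu. if mu \<in> {vscale (sqrt 2) a | a. a \<in> coset g (lat T) \<and> ip (amb T) a a = k}
                      then vac else (\<lambda>M. 0))"

end

theory Submission
  imports Defs
begin


definition good :: "modl \<Rightarrow> bool" where
  "good f \<longleftrightarrow> (\<forall>mu. f mu = vac \<or> f mu = (\<lambda>M. 0))"

lemma hbF_zero: "hbF m a n (\<lambda>M. 0) = (\<lambda>M. 0)"
  by (auto simp: hbF_def fun_eq_iff)

lemma hbF_pos_vac: "n > 0 \<Longrightarrow> hbF m a n vac = (\<lambda>M. 0)"
  by (auto simp: hbF_def fun_eq_iff vac_def)

lemma hbF_pos_g: "g = vac \<or> g = (\<lambda>M. 0) \<Longrightarrow> n > 0 \<Longrightarrow> hbF m a n g = (\<lambda>M. 0)"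
  using hbF_pos_vac hbF_zero by blast

lemma Top_g: "g = vac \<or> g = (\<lambda>M. 0) \<Longrightarrow> c > 0 \<Longrightarrow> Top m b c g = (\<lambda>M. 0)"
proof (induction c rule: less_induct)
  case (less c)
  then obtain a where c: "c = Suc a" by (cases c) auto
  have "\<And>n. n \<in> {1..Suc a} \<Longrightarrow> hbF m b (int n) (Top m b (Suc a - n) g) = (\<lambda>M. 0)"
  proof -
    fix n assume n: "n \<in> {1..Suc a}"
    show "hbF m b (int n) (Top m b (Suc a - n) g) = (\<lambda>M. 0)"
    proof (cases "Suc a - n = 0")
      case True
      then show ?thesis using n less.prems by (simp add: hbF_pos_g)
    next
      case False
      then have "Top m b (Suc a - n) g = (\<lambda>M. 0)" using less n c by auto
      then show ?thesis by (simp add: hbF_zero)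
    qed
  qed
  then show ?case unfolding c by (simp add: fun_eq_iff)
qed

lemma Sop_zero: "Sop m b c (\<lambda>M. 0) = (\<lambda>M. 0)"
proof (induction c rule: less_induct)
  case (less c)
  show ?case
  proof (cases c)
    case 0 then show ?thesis by simp
  next
    case (Suc a)
    have "\<And>n. n \<in> {1..Suc a} \<Longrightarrow> hbF m b (- int n) (Sop m b (Suc a - n) (\<lambda>M. 0)) = (\<lambda>M. 0)"
      using less Suc by (simp add: hbF_zero)
    then show ?thesis unfolding Suc by (simp add: fun_eq_iff)
  qed
qed

lemma hbM_pos: "good f \<Longrightarrow> n > 0 \<Longrightarrow> hbM m a n f = (\<lambda>mu M. 0)"
  unfolding good_def hbM_def using hbF_pos_g by (auto simp: fun_eq_iff)

lemma hbM_zero: "hbM m a n (\<lambda>mu M. 0) = (\<lambda>mu M. 0)"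
  unfolding hbM_def using hbF_zero by (auto simp: fun_eq_iff)

lemma nop_pos: "good f \<Longrightarrow> max p q > 0 \<Longrightarrow> nop m a p q f = (\<lambda>mu M. 0)"
  unfolding nop_def by (auto simp: hbM_pos hbM_zero)

lemma hsq_ge2: "good f \<Longrightarrow> j \<ge> 2 \<Longrightarrow> hsq m a j f mu M = 0"
  unfolding hsq_def by (rule infsum_0) (simp add: nop_pos)

lemma hsq_1: "good f \<Longrightarrow> hsq m a 1 f mu M = complex_of_real (ip m a mu) ^ 2 * f mu M"
proof -
  assume gf: "good f"
  have "hsq m a 1 f mu M = infsum (\<lambda>p::int. nop m a p (1 - 1 - p) f mu M) {0}"
    unfolding hsq_def
    by (rule infsum_cong_neutral) (auto simp: nop_pos gf)
  also have "\<dots> = nop m a 0 0 f mu M" by simp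
  also have "\<dots> = complex_of_real (ip m a mu) ^ 2 * f mu M"
    by (simp add: nop_def hbM_def power2_eq_square)
  finally show ?thesis .
qed

lemma emode_good: "good f \<Longrightarrow> emode m b j f mu M =
  (if ip m b (\<lambda>i. mu i - b i) \<in> \<int> \<and> - j - 1 - \<lfloor>ip m b (\<lambda>i. mu i - b i)\<rfloor> \<ge> 0
   then Sop m b (nat (- j - 1 - \<lfloor>ip m b (\<lambda>i. mu i - b i)\<rfloor>)) (f (\<lambda>i. mu i - b i)) M else 0)"
proof -
  assume gf: "good f"
  define lam where "lam = (\<lambda>i. mu i - b i)"
  define p where "p = ip m b lam"
  have g: "f lam = vac \<or> f lam = (\<lambda>M. 0)" using gf by (simp add: good_def)
  show ?thesis
  proof (cases "p \<in> \<int>")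
    case False then show ?thesis by (simp add: emode_def lam_def[symmetric] p_def[symmetric] Let_def)
  next
    case True
    have "infsum (\<lambda>c::nat. Sop m b (nat (- j - 1 - \<lfloor>p\<rfloor> + int c)) (Top m b c (f lam)) M)
               {c::nat. - j - 1 - \<lfloor>p\<rfloor> + int c \<ge> 0}
        = infsum (\<lambda>c::nat. Sop m b (nat (- j - 1 - \<lfloor>p\<rfloor> + int c)) (Top m b c (f lam)) M)
               (if - j - 1 - \<lfloor>p\<rfloor> \<ge> 0 then {0} else {})"
    proof (rule infsum_cong_neutral)
      fix x assume x: "x \<in> {c::nat. - j - 1 - \<lfloor>p\<rfloor> + int c \<ge> 0} - (if - j - 1 - \<lfloor>p\<rfloor> \<ge> 0 then {0} else {})"
      then have "x > 0" by (cases "x = 0") auto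
      then show "Sop m b (nat (- j - 1 - \<lfloor>p\<rfloor> + int x)) (Top m b x (f lam)) M = 0"
        by (simp add: Top_g[OF g] Sop_zero)
    qed auto
    then show ?thesis using True
      by (simp add: emode_def lam_def[symmetric] p_def[symmetric] Let_def)
  qed
qed




lemma ip_sym: "ip m x y = ip m y x"
  by (simp add: ip_def mult.commute)
lemma ip_add_left: "ip m (\<lambda>i. x i + y i) z = ip m x z + ip m y z"
  by (simp add: ip_def distrib_right sum.distrib)
lemma ip_add_right: "ip m z (\<lambda>i. x i + y i) = ip m z x + ip m z y"
  by (simp add: ip_def distrib_left sum.distrib)
lemma ip_diff_left: "ip m (\<lambda>i. x i - y i) z = ip m x z - ip m y z"
  by (simp add: ip_def left_diff_distrib sum_subtractf)
lemma ip_diff_right: "ip m z (\<lambda>i. x i - y i) = ip m z x - ip m z y"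
  by (simp add: ip_def right_diff_distrib sum_subtractf)
lemma ip_neg_left: "ip m (\<lambda>i. - x i) y = - ip m x y"
  by (simp add: ip_def sum_negf)
lemma ip_neg_right: "ip m y (\<lambda>i. - x i) = - ip m y x"
  by (simp add: ip_def sum_negf)
lemma ip_vscale_left: "ip m (vscale c x) y = c * ip m x y"
  by (simp add: ip_def vscale_def sum_distrib_left mult.assoc)
lemma ip_vscale_right: "ip m x (vscale c y) = c * ip m x y"
  by (simp add: ip_def vscale_def sum_distrib_left mult.left_commute)

lemma vscale_sqrt2_inj: "vscale (sqrt 2) a = vscale (sqrt 2) b \<Longrightarrow> a = b"
  by (auto simp: vscale_def fun_eq_iff)

lemma vscale_neg: "vscale (- sqrt 2) a = vscale (sqrt 2) (\<lambda>i. - a i)"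
  by (simp add: vscale_def fun_eq_iff)

lemma ip_norm_add: "ip m (\<lambda>i. x i + y i) (\<lambda>i. x i + y i) = ip m x x + 2 * ip m x y + ip m y y"
  by (simp add: ip_add_left ip_add_right ip_sym[of m y x])
lemma ip_norm_diff: "ip m (\<lambda>i. x i - y i) (\<lambda>i. x i - y i) = ip m x x - 2 * ip m x y + ip m y y"
  by (simp add: ip_diff_left ip_diff_right ip_sym[of m y x])

lemma int_cases3: "(x::real) \<in> \<int> \<Longrightarrow> -1 \<le> x \<Longrightarrow> x \<le> 1 \<Longrightarrow> x = -1 \<or> x = 0 \<or> x = 1"
proof -
  assume "x \<in> \<int>" "-1 \<le> x" "x \<le> 1"
  then obtain n where n: "x = of_int n" by (auto elim: Ints_cases)
  with \<open>-1 \<le> x\<close> \<open>x \<le> 1\<close> have "n = -1 \<or> n = 0 \<or> n = 1" by auto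
  then show ?thesis using n by auto
qed

locale latsetup =
  fixes m :: nat and R :: "vec set" and g :: vec and k :: real
  assumes add_cl: "r \<in> R \<Longrightarrow> r' \<in> R \<Longrightarrow> (\<lambda>i. r i + r' i) \<in> R"
    and neg_cl: "r \<in> R \<Longrightarrow> (\<lambda>i. - r i) \<in> R"
    and ip_int: "r \<in> R \<Longrightarrow> r' \<in> R \<Longrightarrow> ip m r r' \<in> \<int>"
    and g_int: "r \<in> R \<Longrightarrow> ip m g r \<in> \<int>"
    and kmin: "a \<in> coset g R \<Longrightarrow> k \<le> ip m a a"
begin

definition S where "S = {a \<in> coset g R. ip m a a = k}"
definition F :: modl where
  "F = (\<lambda>mu. if mu \<in> {vscale (sqrt 2) a | a. a \<in> coset g R \<and> ip m a a = k} then vac else (\<lambda>M. 0))"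

lemma F_good: "good F" by (simp add: good_def F_def)

lemma F_alt: "F mu = (if \<exists>a\<in>S. mu = vscale (sqrt 2) a then vac else (\<lambda>M. 0))"
  by (auto simp: F_def S_def)

lemma coset_add: "x \<in> coset g R \<Longrightarrow> a \<in> R \<Longrightarrow> (\<lambda>i. x i + a i) \<in> coset g R"
proof -
  assume "x \<in> coset g R" "a \<in> R"
  then obtain r where r: "r \<in> R" "x = (\<lambda>i. g i + r i)" by (auto simp: coset_def)
  have "(\<lambda>i. r i + a i) \<in> R" using add_cl r \<open>a \<in> R\<close> by blast
  moreover have "(\<lambda>i. x i + a i) = (\<lambda>i. g i + (r i + a i))" using r by (simp add: add.assoc)
  ultimately show ?thesis unfolding coset_def mem_Collect_eq
    by (intro exI[of _ "\<lambda>i. r i + a i"]) simp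
qed

lemma coset_diff: "x \<in> coset g R \<Longrightarrow> a \<in> R \<Longrightarrow> (\<lambda>i. x i - a i) \<in> coset g R"
  using coset_add[of x "\<lambda>i. - a i"] neg_cl by simp

lemma coset_ip_int: "x \<in> coset g R \<Longrightarrow> a \<in> R \<Longrightarrow> ip m a x \<in> \<int>"
proof -
  assume "x \<in> coset g R" "a \<in> R"
  then obtain r where r: "r \<in> R" "x = (\<lambda>i. g i + r i)" by (auto simp: coset_def)
  have "ip m a x = ip m g a + ip m a r" using r by (simp add: ip_add_right ip_sym)
  then show ?thesis using g_int ip_int r \<open>a \<in> R\<close> by simp
qed

lemma roots_neg: "a \<in> roots m R \<Longrightarrow> (\<lambda>i. - a i) \<in> roots m R"
  by (simp add: roots_def neg_cl ip_neg_left ip_neg_right)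

lemma ip_root_S: "a \<in> roots m R \<Longrightarrow> x \<in> S \<Longrightarrow> ip m a x = -1 \<or> ip m a x = 0 \<or> ip m a x = 1"
proof -
  assume a: "a \<in> roots m R" and x: "x \<in> S"
  have aR: "a \<in> R" and aa: "ip m a a = 2" using a by (auto simp: roots_def)
  have xc: "x \<in> coset g R" and xx: "ip m x x = k" using x by (auto simp: S_def)
  have "k \<le> ip m (\<lambda>i. x i + a i) (\<lambda>i. x i + a i)" using kmin coset_add[OF xc aR] by blast
  then have 1: "-1 \<le> ip m a x" by (simp add: ip_norm_add xx aa ip_sym[of m x a])
  have "k \<le> ip m (\<lambda>i. x i - a i) (\<lambda>i. x i - a i)" using kmin coset_diff[OF xc aR] by blast
  then have 2: "ip m a x \<le> 1" by (simp add: ip_norm_diff xx aa ip_sym[of m x a])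
  show ?thesis using int_cases3[OF coset_ip_int[OF xc aR] 1 2] .
qed

lemma emode_F_ge2: "a \<in> roots m R \<Longrightarrow> j \<ge> 2 \<Longrightarrow> emode m (vscale (sqrt 2) a) j F mu M = 0"
proof -
  assume a: "a \<in> roots m R" and j: "j \<ge> 2"
  define lam where "lam = (\<lambda>i. mu i - vscale (sqrt 2) a i)"
  show ?thesis
  proof (cases "\<exists>b\<in>S. lam = vscale (sqrt 2) b")
    case False
    then have "F lam = (\<lambda>M. 0)" by (simp add: F_alt)
    then show ?thesis by (simp add: emode_good[OF F_good] lam_def[symmetric] Sop_zero)
  next
    case True
    then obtain b where b: "b \<in> S" "lam = vscale (sqrt 2) b" by blast
    have "ip m (vscale (sqrt 2) a) lam = 2 * ip m a b"
      using b by (simp add: ip_vscale_left ip_vscale_right)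
    then have "ip m (vscale (sqrt 2) a) lam \<in> {-2, 0, 2}" using ip_root_S[OF a b(1)] by auto
    then have "\<not> (- j - 1 - \<lfloor>ip m (vscale (sqrt 2) a) lam\<rfloor> \<ge> 0)" using j by auto
    then show ?thesis by (simp add: emode_good[OF F_good] lam_def[symmetric])
  qed
qed

lemma emode_F_1: "a \<in> roots m R \<Longrightarrow> emode m (vscale (sqrt 2) a) 1 F mu M =
   (if \<exists>b\<in>S. (\<lambda>i. mu i - vscale (sqrt 2) a i) = vscale (sqrt 2) b \<and> ip m a b = -1 then vac M else 0)"
proof -
  assume a: "a \<in> roots m R"
  define lam where "lam = (\<lambda>i. mu i - vscale (sqrt 2) a i)"
  show ?thesis
  proof (cases "\<exists>b\<in>S. lam = vscale (sqrt 2) b")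
    case False
    then have "F lam = (\<lambda>M. 0)" by (simp add: F_alt)
    then show ?thesis using False by (auto simp: emode_good[OF F_good] lam_def[symmetric] Sop_zero)
  next
    case True
    then obtain b where b: "b \<in> S" "lam = vscale (sqrt 2) b" by blast
    have Fl: "F lam = vac" using b by (auto simp: F_alt)
    have uniq: "\<And>b'. b' \<in> S \<Longrightarrow> lam = vscale (sqrt 2) b' \<Longrightarrow> b' = b"
      using b vscale_sqrt2_inj by metis
    have p: "ip m (vscale (sqrt 2) a) lam = 2 * ip m a b"
      using b by (simp add: ip_vscale_left ip_vscale_right)
    have e: "emode m (vscale (sqrt 2) a) 1 F mu M = (if 2 * ip m a b \<in> \<int> \<and> - 1 - 1 - \<lfloor>2 * ip m a b\<rfloor> \<ge> 0
        then Sop m (vscale (sqrt 2) a) (nat (- 1 - 1 - \<lfloor>2 * ip m a b\<rfloor>)) vac M else 0)"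
      by (simp only: emode_good[OF F_good] lam_def[symmetric] p Fl)
    have ex: "(\<exists>b'\<in>S. lam = vscale (sqrt 2) b' \<and> ip m a b' = -1) \<longleftrightarrow> ip m a b = -1"
      using b uniq by blast
    have "ip m a b = -1 \<or> ip m a b = 0 \<or> ip m a b = 1" using ip_root_S[OF a b(1)] .
    then show ?thesis
    proof (elim disjE)
      assume h: "ip m a b = -1"
      show ?thesis unfolding lam_def[symmetric] e ex h by simp
    next
      assume h: "ip m a b = 0"
      show ?thesis unfolding lam_def[symmetric] e ex h by simp
    next
      assume h: "ip m a b = 1"
      show ?thesis unfolding lam_def[symmetric] e ex h by simp
    qed
  qed
qed

end



lemma csqrt2: "(complex_of_real (sqrt 2))^2 = 2"
  by (simp flip: of_real_power)

context latsetup begin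

lemma ex_shift: "a \<in> roots m R \<Longrightarrow>
  (\<exists>b\<in>S. (\<lambda>i. mu i - vscale (sqrt 2) a i) = vscale (sqrt 2) b \<and> ip m a b = -1) \<longleftrightarrow>
  (\<exists>c\<in>S. mu = vscale (sqrt 2) c \<and> ip m a c = 1)"
proof -
  assume a: "a \<in> roots m R"
  have aR: "a \<in> R" and aa: "ip m a a = 2" using a by (auto simp: roots_def)
  show ?thesis
  proof
    assume "\<exists>b\<in>S. (\<lambda>i. mu i - vscale (sqrt 2) a i) = vscale (sqrt 2) b \<and> ip m a b = -1"
    then obtain b where b: "b \<in> S" "(\<lambda>i. mu i - vscale (sqrt 2) a i) = vscale (sqrt 2) b" "ip m a b = -1" by blast
    define c where "c = (\<lambda>i. b i + a i)"
    have "c \<in> coset g R" using coset_add b(1) aR by (auto simp: S_def c_def)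
    moreover have "ip m c c = k" using b(1,3) aa by (simp add: c_def ip_norm_add S_def ip_sym[of m b a])
    moreover have "mu = vscale (sqrt 2) c"
    proof
      fix i have "mu i - vscale (sqrt 2) a i = vscale (sqrt 2) b i" using b(2) by metis
      then show "mu i = vscale (sqrt 2) c i" by (simp add: vscale_def c_def algebra_simps)
    qed
    moreover have "ip m a c = 1" using b(3) aa by (simp add: c_def ip_add_right)
    ultimately show "\<exists>c\<in>S. mu = vscale (sqrt 2) c \<and> ip m a c = 1" by (auto simp: S_def)
  next
    assume "\<exists>c\<in>S. mu = vscale (sqrt 2) c \<and> ip m a c = 1"
    then obtain c where c: "c \<in> S" "mu = vscale (sqrt 2) c" "ip m a c = 1" by blast
    define b where "b = (\<lambda>i. c i - a i)"
    have "b \<in> coset g R" using coset_diff c(1) aR by (auto simp: S_def b_def)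
    moreover have "ip m b b = k" using c(1,3) aa by (simp add: b_def ip_norm_diff S_def ip_sym[of m c a])
    moreover have "(\<lambda>i. mu i - vscale (sqrt 2) a i) = vscale (sqrt 2) b"
      using c(2) by (simp add: vscale_def b_def fun_eq_iff algebra_simps)
    moreover have "ip m a b = -1" using c(3) aa by (simp add: b_def ip_diff_right)
    ultimately show "\<exists>b\<in>S. (\<lambda>i. mu i - vscale (sqrt 2) a i) = vscale (sqrt 2) b \<and> ip m a b = -1"
      by (auto simp: S_def)
  qed
qed

lemma summand_zero: "a \<in> roots m R \<Longrightarrow>
  hsq m a 1 F mu M - 2 * (emode m (vscale (sqrt 2) a) 1 F mu M + emode m (vscale (- sqrt 2) a) 1 F mu M) = 0"
proof -
  assume a: "a \<in> roots m R"
  have na: "(\<lambda>i. - a i) \<in> roots m R" using roots_neg[OF a] .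
  have e1: "emode m (vscale (sqrt 2) a) 1 F mu M = (if \<exists>c\<in>S. mu = vscale (sqrt 2) c \<and> ip m a c = 1 then vac M else 0)"
    using emode_F_1[OF a] ex_shift[OF a] by simp
  have e2: "emode m (vscale (- sqrt 2) a) 1 F mu M = (if \<exists>c\<in>S. mu = vscale (sqrt 2) c \<and> ip m (\<lambda>i. - a i) c = 1 then vac M else 0)"
    using emode_F_1[OF na] ex_shift[OF na] by (simp add: vscale_neg)
  show ?thesis
  proof (cases "\<exists>c\<in>S. mu = vscale (sqrt 2) c")
    case False
    then have "F mu = (\<lambda>M. 0)" by (simp add: F_alt)
    then show ?thesis using False by (simp add: hsq_1[OF F_good] e1 e2)
  next
    case True
    then obtain c where c: "c \<in> S" "mu = vscale (sqrt 2) c" by blast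
    have uniq: "\<And>c'. c' \<in> S \<Longrightarrow> mu = vscale (sqrt 2) c' \<Longrightarrow> c' = c"
      using c vscale_sqrt2_inj by metis
    have Fm: "F mu = vac" using True by (simp add: F_alt)
    have ipm: "ip m a mu = sqrt 2 * ip m a c" using c(2) by (simp add: ip_vscale_right)
    have x1: "(\<exists>c'\<in>S. mu = vscale (sqrt 2) c' \<and> ip m a c' = 1) \<longleftrightarrow> ip m a c = 1"
      using c uniq by blast
    have x2: "(\<exists>c'\<in>S. mu = vscale (sqrt 2) c' \<and> ip m (\<lambda>i. - a i) c' = 1) \<longleftrightarrow> ip m a c = -1"
      using c uniq by (auto simp: ip_neg_left)
    have h: "hsq m a 1 F mu M = complex_of_real (2 * (ip m a c)^2) * vac M"
      by (simp add: hsq_1[OF F_good] Fm ipm power_mult_distrib csqrt2)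
    have "ip m a c = -1 \<or> ip m a c = 0 \<or> ip m a c = 1" using ip_root_S[OF a c(1)] .
    then show ?thesis
      by (elim disjE) (simp_all only: h e1 e2 x1 x2, simp_all)
  qed
qed

lemma omode_sum:
  assumes P: "P \<subseteq> roots m R"
    and rs: "\<forall>c\<in>coset g R. (\<Sum>a\<in>P. (ip m a c)^2) = h * ip m c c"
  shows "(\<Sum>a\<in>P. hsq m a 1 F mu M) = complex_of_real (2 * h * k) * F mu M"
proof (cases "\<exists>c\<in>S. mu = vscale (sqrt 2) c")
  case False
  then have "F mu = (\<lambda>M. 0)" by (simp add: F_alt)
  then show ?thesis by (simp add: hsq_1[OF F_good])
next
  case True
  then obtain c where c: "c \<in> S" "mu = vscale (sqrt 2) c" by blast
  have Fm: "F mu = vac" using True by (simp add: F_alt)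
  have ipm: "\<And>a. ip m a mu = sqrt 2 * ip m a c" using c(2) by (simp add: ip_vscale_right)
  have "(\<Sum>a\<in>P. hsq m a 1 F mu M) = (\<Sum>a\<in>P. complex_of_real (2 * (ip m a c)^2) * vac M)"
    by (rule sum.cong) (simp_all add: hsq_1[OF F_good] Fm ipm power_mult_distrib csqrt2)
  also have "\<dots> = complex_of_real (2 * (\<Sum>a\<in>P. (ip m a c)^2)) * vac M"
    by (simp add: sum_distrib_right sum_distrib_left)
  also have "\<dots> = complex_of_real (2 * h * k) * F mu M"
    using rs c(1) by (simp add: S_def Fm)
  finally show ?thesis .
qed

end



lemma latA_add: "x \<in> latA n \<Longrightarrow> y \<in> latA n \<Longrightarrow> (\<lambda>i. x i + y i) \<in> latA n"
  by (auto simp: latA_def sum.distrib)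
lemma latA_neg: "x \<in> latA n \<Longrightarrow> (\<lambda>i. - x i) \<in> latA n"
  by (auto simp: latA_def sum_negf)
lemma latA_ip: "x \<in> latA n \<Longrightarrow> y \<in> latA n \<Longrightarrow> ip (Suc n) x y \<in> \<int>"
  unfolding ip_def latA_def by (auto intro!: Ints_sum Ints_mult)

lemma latD_add: "x \<in> latD n \<Longrightarrow> y \<in> latD n \<Longrightarrow> (\<lambda>i. x i + y i) \<in> latD n"
proof -
  assume x: "x \<in> latD n" and y: "y \<in> latD n"
  then obtain z w :: int where "(\<Sum>i<n. x i) = 2 * of_int z" "(\<Sum>i<n. y i) = 2 * of_int w"
    by (auto simp: latD_def)
  then have "(\<Sum>i<n. x i + y i) = 2 * of_int (z + w)" by (simp add: sum.distrib algebra_simps)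
  then have "\<exists>z'::int. (\<Sum>i<n. x i + y i) = 2 * of_int z'" by blast
  then show ?thesis using x y unfolding latD_def mem_Collect_eq by auto
qed
lemma latD_neg: "x \<in> latD n \<Longrightarrow> (\<lambda>i. - x i) \<in> latD n"
proof -
  assume x: "x \<in> latD n"
  then obtain z :: int where "(\<Sum>i<n. x i) = 2 * of_int z" by (auto simp: latD_def)
  then have "(\<Sum>i<n. - x i) = 2 * of_int (- z)" by (simp add: sum_negf)
  then have "\<exists>z'::int. (\<Sum>i<n. - x i) = 2 * of_int z'" by blast
  then show ?thesis using x unfolding latD_def mem_Collect_eq by auto
qed
lemma latD_ip: "x \<in> latD n \<Longrightarrow> y \<in> latD n \<Longrightarrow> ip n x y \<in> \<int>"
  unfolding ip_def latD_def by (auto intro!: Ints_sum Ints_mult)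

definition halfE :: "vec set" where
  "halfE = {x. (\<forall>i\<ge>8. x i = 0) \<and> (\<forall>i<8. x i - 1/2 \<in> \<int>) \<and> (\<exists>z::int. (\<Sum>i<8. x i) = 2 * of_int z)}"

lemma latE8_alt: "latE8 = latD 8 \<union> halfE"
  by (simp add: latE8_def halfE_def)

lemma halfE_add_D: "x \<in> latD 8 \<Longrightarrow> y \<in> halfE \<Longrightarrow> (\<lambda>i. x i + y i) \<in> halfE"
proof -
  assume x: "x \<in> latD 8" and y: "y \<in> halfE"
  then obtain z w :: int where "(\<Sum>i<8. x i) = 2 * of_int z" "(\<Sum>i<8. y i) = 2 * of_int w"
    by (auto simp: latD_def halfE_def)
  then have "(\<Sum>i<8. x i + y i) = 2 * of_int (z + w)" by (simp add: sum.distrib algebra_simps)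
  then have s: "\<exists>z'::int. (\<Sum>i<8. x i + y i) = 2 * of_int z'" by blast
  have "\<And>i. i < 8 \<Longrightarrow> x i + y i - 1/2 \<in> \<int>"
  proof -
    fix i :: nat assume "i < 8"
    then have "x i \<in> \<int>" "y i - 1/2 \<in> \<int>" using x y by (auto simp: latD_def halfE_def)
    then have h: "x i + (y i - 1/2) \<in> \<int>" by (intro Ints_add) auto
    have "x i + y i - 1/2 = x i + (y i - 1/2)" by simp
    then show "x i + y i - 1/2 \<in> \<int>" using h by metis
  qed
  then show ?thesis using x y s unfolding latD_def halfE_def mem_Collect_eq by auto
qed

lemma halfE_add_half: "x \<in> halfE \<Longrightarrow> y \<in> halfE \<Longrightarrow> (\<lambda>i. x i + y i) \<in> latD 8"
proof -
  assume x: "x \<in> halfE" and y: "y \<in> halfE"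
  then obtain z w :: int where "(\<Sum>i<8. x i) = 2 * of_int z" "(\<Sum>i<8. y i) = 2 * of_int w"
    by (auto simp: halfE_def)
  then have "(\<Sum>i<8. x i + y i) = 2 * of_int (z + w)" by (simp add: sum.distrib algebra_simps)
  then have s: "\<exists>z'::int. (\<Sum>i<8. x i + y i) = 2 * of_int z'" by blast
  have "\<And>i. i < 8 \<Longrightarrow> x i + y i \<in> \<int>"
  proof -
    fix i :: nat assume "i < 8"
    then have "x i - 1/2 \<in> \<int>" "y i - 1/2 \<in> \<int>" using x y by (auto simp: halfE_def)
    then have h: "(x i - 1/2) + (y i - 1/2) + 1 \<in> \<int>" by (intro Ints_add Ints_1) auto
    have "x i + y i = (x i - 1/2) + (y i - 1/2) + 1" by simp
    then show "x i + y i \<in> \<int>" using h by metis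
  qed
  then show ?thesis using x y s unfolding latD_def halfE_def mem_Collect_eq by auto
qed

lemma halfE_neg: "x \<in> halfE \<Longrightarrow> (\<lambda>i. - x i) \<in> halfE"
proof -
  assume x: "x \<in> halfE"
  then obtain z :: int where "(\<Sum>i<8. x i) = 2 * of_int z" by (auto simp: halfE_def)
  then have "(\<Sum>i<8. - x i) = 2 * of_int (- z)" by (simp add: sum_negf)
  then have s: "\<exists>z'::int. (\<Sum>i<8. - x i) = 2 * of_int z'" by blast
  have "\<And>i. i < 8 \<Longrightarrow> - x i - 1/2 \<in> \<int>"
  proof -
    fix i :: nat assume "i < 8"
    then have "x i - 1/2 \<in> \<int>" using x by (auto simp: halfE_def)
    then have h: "- (x i - 1/2) - 1 \<in> \<int>" by (rule Ints_diff[OF Ints_minus Ints_1])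
    have "- x i - 1/2 = - (x i - 1/2) - 1" by simp
    then show "- x i - 1/2 \<in> \<int>" using h by metis
  qed
  then show ?thesis using x s unfolding halfE_def mem_Collect_eq by auto
qed

lemma latE8_add: "x \<in> latE8 \<Longrightarrow> y \<in> latE8 \<Longrightarrow> (\<lambda>i. x i + y i) \<in> latE8"
  unfolding latE8_alt using latD_add halfE_add_D halfE_add_half halfE_add_D[of y x]
  by (auto simp: add.commute)
lemma latE8_neg: "x \<in> latE8 \<Longrightarrow> (\<lambda>i. - x i) \<in> latE8"
  unfolding latE8_alt using latD_neg halfE_neg by auto

lemma ip_half_shift: "ip 8 x y = (\<Sum>i<8. x i * (y i - 1/2)) + (\<Sum>i<8. x i) / 2"
  by (simp add: ip_def right_diff_distrib sum_subtractf sum_divide_distrib)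

lemma halfE_ip_D: "x \<in> latD 8 \<Longrightarrow> y \<in> halfE \<Longrightarrow> ip 8 x y \<in> \<int>"
proof -
  assume x: "x \<in> latD 8" and y: "y \<in> halfE"
  then obtain z :: int where z: "(\<Sum>i<8. x i) = 2 * of_int z" by (auto simp: latD_def)
  have "(\<Sum>i<8. x i * (y i - 1/2)) \<in> \<int>" using x y by (auto simp: latD_def halfE_def intro!: Ints_sum Ints_mult)
  then show ?thesis by (simp add: ip_half_shift z)
qed

lemma halfE_ip_half: "x \<in> halfE \<Longrightarrow> y \<in> halfE \<Longrightarrow> ip 8 x y \<in> \<int>"
proof -
  assume x: "x \<in> halfE" and y: "y \<in> halfE"
  obtain z :: int where z: "(\<Sum>i<8. x i) = 2 * of_int z" using x by (auto simp: halfE_def)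
  obtain w :: int where w: "(\<Sum>i<8. y i) = 2 * of_int w" using y by (auto simp: halfE_def)
  have "(\<Sum>i<8. x i * (y i - 1/2)) = (\<Sum>i<8. (y i - 1/2) * (x i - 1/2)) + (\<Sum>i<8. (y i - 1/2)) / 2"
    unfolding sum_divide_distrib sum.distrib[symmetric] by (rule sum.cong) (auto simp: field_simps)
  also have "(\<Sum>i<8. (y i - 1/2)) = 2 * of_int w - 4" by (simp add: sum_subtractf w)
  finally have e: "(\<Sum>i<8. x i * (y i - 1/2)) = (\<Sum>i<8. (y i - 1/2) * (x i - 1/2)) + (of_int (w - 2))"
    by simp
  have "(\<Sum>i<8. (y i - 1/2) * (x i - 1/2)) \<in> \<int>" using x y by (auto simp: halfE_def intro!: Ints_sum Ints_mult)
  then show ?thesis by (simp add: ip_half_shift z e)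
qed

lemma latE8_ip: "x \<in> latE8 \<Longrightarrow> y \<in> latE8 \<Longrightarrow> ip 8 x y \<in> \<int>"
  unfolding latE8_alt using latD_ip halfE_ip_D halfE_ip_half halfE_ip_D[of y x] ip_sym[of 8 y x]
  by auto

lemma lat_add: "adm T \<Longrightarrow> r \<in> lat T \<Longrightarrow> r' \<in> lat T \<Longrightarrow> (\<lambda>i. r i + r' i) \<in> lat T"
  by (cases T) (auto simp: latA_add latD_add latE8_add latE7_def latE6_def)
lemma lat_neg: "adm T \<Longrightarrow> r \<in> lat T \<Longrightarrow> (\<lambda>i. - r i) \<in> lat T"
  by (cases T) (auto simp: latA_neg latD_neg latE8_neg latE7_def latE6_def)
lemma lat_ip_int: "adm T \<Longrightarrow> r \<in> lat T \<Longrightarrow> r' \<in> lat T \<Longrightarrow> ip (amb T) r r' \<in> \<int>"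
  by (cases T) (auto simp: latA_ip latD_ip latE8_ip latE7_def latE6_def)




definition dv :: "nat \<Rightarrow> nat \<Rightarrow> real \<Rightarrow> real \<Rightarrow> vec" where
  "dv i j s t = (\<lambda>k. (if k = i then s else 0) + (if k = j then t else 0))"

lemma ip_dv: "i < m \<Longrightarrow> j < m \<Longrightarrow> i \<noteq> j \<Longrightarrow> ip m (dv i j s t) y = s * y i + t * y j"
proof -
  assume h: "i < m" "j < m" "i \<noteq> j"
  have "ip m (dv i j s t) y = (\<Sum>k<m. (if k = i then s * y i else 0) + (if k = j then t * y j else 0))"
    unfolding ip_def by (rule sum.cong) (use h in \<open>auto simp: dv_def\<close>)
  then show ?thesis using h by (simp add: sum.distrib)
qed

lemma sum_dv: "i < m \<Longrightarrow> j < m \<Longrightarrow> i \<noteq> j \<Longrightarrow> (\<Sum>k<m. dv i j s t k) = s + t"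
  by (simp add: dv_def sum.distrib)

lemma int_sq_ge1: "(x::real) \<in> \<int> \<Longrightarrow> x \<noteq> 0 \<Longrightarrow> x * x \<le> 2 \<Longrightarrow> x = 1 \<or> x = -1"
proof -
  assume "x \<in> \<int>" "x \<noteq> 0" "x * x \<le> 2"
  then obtain n where n: "x = of_int n" by (auto elim: Ints_cases)
  have "n \<noteq> 0" using n \<open>x \<noteq> 0\<close> by auto
  have "n * n \<le> 2" using \<open>x * x \<le> 2\<close> n by (metis of_int_le_iff of_int_mult of_int_numeral)
  have "n = 1 \<or> n = -1"
  proof (rule ccontr)
    assume "\<not> (n = 1 \<or> n = -1)"
    then have "\<bar>n\<bar> \<ge> 2" using \<open>n \<noteq> 0\<close> by auto
    then have "\<bar>n\<bar> * \<bar>n\<bar> \<ge> 2 * 2" by (meson mult_mono order_trans zero_le_numeral)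
    then show False using \<open>n * n \<le> 2\<close> by (simp add: abs_mult[symmetric])
  qed
  then show ?thesis using n by auto
qed

lemma int_norm2:
  assumes sup: "\<forall>i\<ge>m. x i = 0" and int: "\<forall>i<m. x i \<in> \<int>" and nrm: "ip m x x = 2"
  shows "\<exists>i j s t. i < j \<and> j < m \<and> s \<in> {-1,1} \<and> t \<in> {-1,1} \<and> x = dv i j s t"
proof -
  define Z where "Z = {i\<in>{..<m}. x i \<noteq> 0}"
  have finZ: "finite Z" by (simp add: Z_def)
  have le: "x i * x i \<le> 2" if "i < m" for i
  proof -
    have "x i * x i \<le> (\<Sum>k<m. x k * x k)"
      by (rule member_le_sum) (use that in auto)
    then show ?thesis using nrm by (simp add: ip_def)
  qed
  have pm: "x i = 1 \<or> x i = -1" if "i \<in> Z" for i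
    using that int le int_sq_ge1 by (auto simp: Z_def)
  have "ip m x x = (\<Sum>i\<in>Z. x i * x i)"
    unfolding ip_def by (rule sum.mono_neutral_right) (auto simp: Z_def)
  also have "\<dots> = (\<Sum>i\<in>Z. 1)"
  proof (rule sum.cong)
    fix i assume "i \<in> Z"
    then have "x i = 1 \<or> x i = -1" by (rule pm)
    then show "x i * x i = 1" by auto
  qed simp
  finally have "card Z = 2" using nrm by simp
  then obtain a b where ab: "a \<noteq> b" "Z = {a, b}" by (auto simp: card_2_iff)
  define i where "i = min a b"
  define j where "j = max a b"
  have Zij: "Z = {i, j}" "i < j" using ab by (auto simp: i_def j_def min_def max_def)
  have "j < m" using Zij by (auto simp: Z_def)
  have "x = dv i j (x i) (x j)"
  proof
    fix k
    show "x k = dv i j (x i) (x j) k"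
    proof (cases "k \<in> Z")
      case True then show ?thesis using Zij by (auto simp: dv_def)
    next
      case False
      then have "x k = 0" using sup by (cases "k < m") (auto simp: Z_def)
      moreover have "k \<noteq> i" "k \<noteq> j" using False Zij by auto
      ultimately show ?thesis by (simp add: dv_def)
    qed
  qed
  moreover have "x i \<in> {-1,1}" "x j \<in> {-1,1}" using pm Zij by auto
  ultimately show ?thesis using Zij \<open>j < m\<close> by blast
qed

lemma halfint_sq: "(y::real) - 1/2 \<in> \<int> \<Longrightarrow> y * y \<ge> 1/4 \<and> (y * y \<le> 1/4 \<longrightarrow> y = 1/2 \<or> y = -1/2)"
proof -
  assume "y - 1/2 \<in> \<int>"
  then obtain n where n: "y - 1/2 = of_int n" by (auto elim: Ints_cases)
  then have y: "y = of_int n + 1/2" by simp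
  have yy: "y * y = of_int (n * (n + 1)) + 1/4" by (simp add: y algebra_simps)
  have nn: "n * (n + 1) \<ge> 0"
    by (cases "n \<ge> 0") (simp_all add: mult_nonneg_nonneg mult_nonpos_nonpos)
  have c2: "n * (n + 1) \<le> 0 \<Longrightarrow> n = 0 \<or> n = -1"
  proof (rule ccontr)
    assume h: "n * (n + 1) \<le> 0" and "\<not> (n = 0 \<or> n = -1)"
    then have "n \<ge> 1 \<or> n \<le> -2" by auto
    then show False
    proof
      assume "n \<ge> 1" then have "n * (n + 1) \<ge> 1 * 2" by (intro mult_mono) auto
      then show False using h by linarith
    next
      assume "n \<le> -2" then have "2 * 1 \<le> (-n) * (-(n+1))" by (intro mult_mono) auto
      moreover have "(-n) * (-(n+1)) = n * (n + 1)" by (simp add: algebra_simps)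
      ultimately show False using h by linarith
    qed
  qed
  have nn': "(0::real) \<le> of_int (n * (n + 1))" using nn by (simp only: of_int_0_le_iff)
  have "y * y \<ge> 1/4" using nn' yy by linarith
  moreover have "y * y \<le> 1/4 \<longrightarrow> y = 1/2 \<or> y = -1/2"
  proof
    assume "y * y \<le> 1/4"
    then have "of_int (n * (n + 1)) \<le> (0::real)" using yy by linarith
    then have "n * (n + 1) \<le> 0" by (simp only: of_int_le_0_iff)
    then have "n = 0 \<or> n = -1" by (rule c2)
    then show "y = 1/2 \<or> y = -1/2" using y by auto
  qed
  ultimately show ?thesis by blast
qed

lemma half_norm2:
  assumes half: "\<forall>i<8. x i - 1/2 \<in> \<int>" and nrm: "ip 8 x x = 2"
  shows "\<forall>i<8. x i = 1/2 \<or> x i = -1/2"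
proof (intro allI impI)
  fix i :: nat assume i: "i < 8"
  have "(\<Sum>k<8. x k * x k) = x i * x i + (\<Sum>k\<in>{..<8} - {i}. x k * x k)"
    using i by (simp add: sum.remove)
  moreover have "(\<Sum>k\<in>{..<8} - {i}. x k * x k) \<ge> of_nat (card ({..<8::nat} - {i})) * (1/4)"
    by (rule sum_bounded_below) (use half halfint_sq in auto)
  moreover have "card ({..<8::nat} - {i}) = 7" using i by simp
  ultimately have "x i * x i \<le> 1/4" using nrm by (simp add: ip_def)
  moreover have "x i - 1/2 \<in> \<int>" using half i by blast
  ultimately show "x i = 1/2 \<or> x i = -1/2" using halfint_sq by blast
qed

lemma pair_sum: "(\<Sum>(i,j)\<in>{(i,j). i < j \<and> j < n}. f i + f j) = (real n - 1) * (\<Sum>i<n. f i :: real)"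
proof (induction n)
  case 0 then show ?case by simp
next
  case (Suc n)
  have e: "{(i,j). i < j \<and> j < Suc n} = {(i,j). i < j \<and> j < n} \<union> (\<lambda>i. (i, n)) ` {..<n}" by auto
  have d: "{(i,j). i < j \<and> j < n} \<inter> (\<lambda>i. (i, n)) ` {..<n} = {}" by auto
  have f: "finite {(i,j). i < j \<and> j < n}"
    by (rule finite_subset[of _ "{..<n} \<times> {..<n}"]) auto
  have "(\<Sum>(i,j)\<in>{(i,j). i < j \<and> j < Suc n}. f i + f j) =
     (\<Sum>(i,j)\<in>{(i,j). i < j \<and> j < n}. f i + f j) + (\<Sum>i<n. f i + f n)"
    unfolding e using f d by (simp add: sum.union_disjoint sum.reindex inj_on_def)
  also have "\<dots> = (real n - 1) * (\<Sum>i<n. f i) + (\<Sum>i<n. f i) + real n * f n"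
    using Suc by (simp add: sum.distrib)
  also have "\<dots> = (real (Suc n) - 1) * (\<Sum>i<Suc n. f i)" by (simp add: algebra_simps)
  finally show ?case .
qed

lemma pair_sumA: "(\<Sum>(i,j)\<in>{(i,j). i < j \<and> j < n}. (f i - f j)^2) =
   real n * (\<Sum>i<n. (f i)^2) - (\<Sum>i<n. f i :: real)^2"
proof (induction n)
  case 0 then show ?case by simp
next
  case (Suc n)
  have e: "{(i,j). i < j \<and> j < Suc n} = {(i,j). i < j \<and> j < n} \<union> (\<lambda>i. (i, n)) ` {..<n}" by auto
  have d: "{(i,j). i < j \<and> j < n} \<inter> (\<lambda>i. (i, n)) ` {..<n} = {}" by auto
  have f: "finite {(i,j). i < j \<and> j < n}"
    by (rule finite_subset[of _ "{..<n} \<times> {..<n}"]) auto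
  have "(\<Sum>(i,j)\<in>{(i,j). i < j \<and> j < Suc n}. (f i - f j)^2) =
     (\<Sum>(i,j)\<in>{(i,j). i < j \<and> j < n}. (f i - f j)^2) + (\<Sum>i<n. (f i - f n)^2)"
    unfolding e using f d by (simp add: sum.union_disjoint sum.reindex inj_on_def)
  also have "(\<Sum>i<n. (f i - f n)^2) = (\<Sum>i<n. (f i)^2) - 2 * f n * (\<Sum>i<n. f i) + real n * (f n)^2"
    by (simp add: power2_diff sum.distrib sum_subtractf sum_distrib_left algebra_simps)
  finally have "(\<Sum>(i,j)\<in>{(i,j). i < j \<and> j < Suc n}. (f i - f j)^2) =
     (real n * (\<Sum>i<n. (f i)^2) - (\<Sum>i<n. f i)^2) + ((\<Sum>i<n. (f i)^2) - 2 * f n * (\<Sum>i<n. f i) + real n * (f n)^2)"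
    using Suc by simp
  moreover have "\<And>Q S a. (real n * Q - S^2) + (Q - 2 * a * S + real n * a^2) = real (Suc n) * (Q + a^2) - (S + a)^2"
    by (simp add: power2_eq_square algebra_simps)
  ultimately show ?case by simp
qed




definition dvp :: "(nat \<times> nat) \<times> (real \<times> real) \<Rightarrow> vec" where
  "dvp p = (case p of ((i, j), (s, t)) \<Rightarrow> dv i j s t)"

definition pairs :: "nat \<Rightarrow> (nat \<times> nat) set" where
  "pairs n = {(i,j). i < j \<and> j < n}"

definition Dpar :: "nat \<Rightarrow> ((nat \<times> nat) \<times> (real \<times> real)) set" where
  "Dpar n = pairs n \<times> ({-1,1} \<times> {-1,1})"

definition Apar :: "nat \<Rightarrow> ((nat \<times> nat) \<times> (real \<times> real)) set" where
  "Apar n = pairs n \<times> {(1,-1),(-1,1)}"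

lemma finite_pairs: "finite (pairs n)"
  by (rule finite_subset[of _ "{..<n} \<times> {..<n}"]) (auto simp: pairs_def)

lemma finite_Dpar: "finite (Dpar n)" by (simp add: Dpar_def finite_pairs)
lemma finite_Apar: "finite (Apar n)" by (simp add: Apar_def finite_pairs)

lemma dv_supp: "i < j \<Longrightarrow> s \<noteq> 0 \<Longrightarrow> t \<noteq> 0 \<Longrightarrow> {k. dv i j s t k \<noteq> 0} = {i, j}"
  by (auto simp: dv_def)

lemma dvp_inj: "inj_on dvp {p. fst (fst p) < snd (fst p) \<and> fst (snd p) \<noteq> 0 \<and> snd (snd p) \<noteq> 0}"
proof (rule inj_onI)
  fix p q assume p: "p \<in> {p. fst (fst p) < snd (fst p) \<and> fst (snd p) \<noteq> 0 \<and> snd (snd p) \<noteq> 0}"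
    and q: "q \<in> {p. fst (fst p) < snd (fst p) \<and> fst (snd p) \<noteq> 0 \<and> snd (snd p) \<noteq> 0}"
    and e: "dvp p = dvp q"
  obtain i j s t where pp: "p = ((i,j),(s,t))" by (metis prod.collapse)
  obtain i' j' s' t' where qq: "q = ((i',j'),(s',t'))" by (metis prod.collapse)
  have c: "i < j" "s \<noteq> 0" "t \<noteq> 0" "i' < j'" "s' \<noteq> 0" "t' \<noteq> 0" using p q pp qq by auto
  have e': "dv i j s t = dv i' j' s' t'" using e pp qq by (simp add: dvp_def)
  have "{i, j} = {i', j'}" using dv_supp[of i j s t] dv_supp[of i' j' s' t'] c e' by simp
  then have ij: "i = i'" "j = j'" using c by (auto simp: doubleton_eq_iff)
  have "s = s'" using fun_cong[OF e', of i] c ij by (simp add: dv_def)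
  moreover have "t = t'" using fun_cong[OF e', of j] c ij by (simp add: dv_def)
  ultimately show "p = q" using pp qq ij by simp
qed

lemma inj_Dpar: "inj_on dvp (Dpar n)"
  by (rule inj_on_subset[OF dvp_inj]) (auto simp: Dpar_def pairs_def)
lemma inj_Apar: "inj_on dvp (Apar n)"
  by (rule inj_on_subset[OF dvp_inj]) (auto simp: Apar_def pairs_def)

lemma sum_prod_split: "(\<Sum>p\<in>A\<times>B. f p) = (\<Sum>x\<in>A. \<Sum>z\<in>B. f (x,z))"
  by (simp add: sum.cartesian_product)

lemma Dsum: "n \<le> m \<Longrightarrow> (\<Sum>p\<in>Dpar n. (ip m (dvp p) y)^2) = 4 * (real n - 1) * (\<Sum>i<n. (y i)^2)"
proof -
  assume nm: "n \<le> m"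
  have sq: "{-1,1::real}\<times>{-1,1} = {(-1,-1),(-1,1),(1,-1),(1,1)}" by auto
  have "(\<Sum>p\<in>Dpar n. (ip m (dvp p) y)^2) = (\<Sum>x\<in>pairs n. \<Sum>z\<in>{-1,1::real}\<times>{-1,1}. (ip m (dvp (x,z)) y)^2)"
    unfolding Dpar_def by (rule sum_prod_split)
  also have "\<dots> = (\<Sum>x\<in>pairs n. 4 * ((y (fst x))^2 + (y (snd x))^2))"
  proof (rule sum.cong)
    fix x assume x: "x \<in> pairs n"
    obtain i j where ij: "x = (i,j)" by (cases x)
    have h: "i < m" "j < m" "i \<noteq> j" using x ij nm by (auto simp: pairs_def)
    show "(\<Sum>z\<in>{-1,1::real}\<times>{-1,1}. (ip m (dvp (x,z)) y)^2) = 4 * ((y (fst x))^2 + (y (snd x))^2)"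
      unfolding sq ij using h by (simp add: dvp_def ip_dv power2_eq_square algebra_simps)
  qed simp
  also have "\<dots> = 4 * (\<Sum>x\<in>pairs n. (y (fst x))^2 + (y (snd x))^2)"
    by (simp add: sum_distrib_left)
  also have "\<dots> = 4 * (real n - 1) * (\<Sum>i<n. (y i)^2)"
    using pair_sum[of "\<lambda>i. (y i)^2" n] by (simp add: pairs_def case_prod_beta)
  finally show ?thesis .
qed

lemma Asum: "(\<Sum>p\<in>Apar n. (ip n (dvp p) y)^2) = 2 * (real n * (\<Sum>i<n. (y i)^2) - (\<Sum>i<n. y i)^2)"
proof -
  have "(\<Sum>p\<in>Apar n. (ip n (dvp p) y)^2) = (\<Sum>x\<in>pairs n. \<Sum>z\<in>{(1::real,-1::real),(-1,1)}. (ip n (dvp (x,z)) y)^2)"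
    unfolding Apar_def by (rule sum_prod_split)
  also have "\<dots> = (\<Sum>x\<in>pairs n. 2 * (y (fst x) - y (snd x))^2)"
  proof (rule sum.cong)
    fix x assume x: "x \<in> pairs n"
    obtain i j where ij: "x = (i,j)" by (cases x)
    have h: "i < n" "j < n" "i \<noteq> j" using x ij by (auto simp: pairs_def)
    show "(\<Sum>z\<in>{(1::real,-1::real),(-1,1)}. (ip n (dvp (x,z)) y)^2) = 2 * (y (fst x) - y (snd x))^2"
      unfolding ij using h by (simp add: dvp_def ip_dv power2_eq_square algebra_simps)
  qed simp
  also have "\<dots> = 2 * (\<Sum>x\<in>pairs n. (y (fst x) - y (snd x))^2)"
    by (simp add: sum_distrib_left)
  also have "\<dots> = 2 * (real n * (\<Sum>i<n. (y i)^2) - (\<Sum>i<n. y i)^2)"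
    using pair_sumA[of y n] by (simp add: pairs_def case_prod_beta)
  finally show ?thesis .
qed

lemma ip_dv_self: "i < m \<Longrightarrow> j < m \<Longrightarrow> i \<noteq> j \<Longrightarrow> ip m (dv i j s t) (dv i j s t) = s * s + t * t"
  by (simp add: ip_dv) (simp add: dv_def)

lemma rootsD: "roots n (latD n) = dvp ` Dpar n"
proof
  show "roots n (latD n) \<subseteq> dvp ` Dpar n"
  proof
    fix x assume x: "x \<in> roots n (latD n)"
    then have "\<forall>i\<ge>n. x i = 0" "\<forall>i<n. x i \<in> \<int>" "ip n x x = 2" by (auto simp: roots_def latD_def)
    then obtain i j s t where "i < j" "j < n" "s \<in> {-1,1}" "t \<in> {-1,1}" "x = dv i j s t"
      using int_norm2 by blast
    then show "x \<in> dvp ` Dpar n"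
      by (intro image_eqI[of _ _ "((i,j),(s,t))"]) (auto simp: dvp_def Dpar_def pairs_def)
  qed
  show "dvp ` Dpar n \<subseteq> roots n (latD n)"
  proof
    fix x assume "x \<in> dvp ` Dpar n"
    then obtain i j s t where h: "i < j" "j < n" "s \<in> {-1,1}" "t \<in> {-1,1}" "x = dv i j s t"
      by (auto simp: dvp_def Dpar_def pairs_def)
    have "s + t = 2 * of_int (-1) \<or> s + t = 2 * of_int 0 \<or> s + t = 2 * of_int 1" using h by auto
    then obtain z :: int where z: "s + t = 2 * of_int z" by blast
    have "(\<Sum>k<n. x k) = 2 * of_int z" using h sum_dv[of i n j s t] z by simp
    then have "\<exists>z::int. (\<Sum>k<n. x k) = 2 * of_int z" by blast
    moreover have "\<forall>k\<ge>n. x k = 0" "\<forall>k<n. x k \<in> \<int>" using h by (auto simp: dv_def)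
    moreover have "ip n x x = 2" using h ip_dv_self[of i n j s t] by auto
    ultimately show "x \<in> roots n (latD n)" by (auto simp: roots_def latD_def)
  qed
qed

lemma rootsA: "roots (Suc n) (latA n) = dvp ` Apar (Suc n)"
proof
  show "roots (Suc n) (latA n) \<subseteq> dvp ` Apar (Suc n)"
  proof
    fix x assume x: "x \<in> roots (Suc n) (latA n)"
    then have "\<forall>i\<ge>Suc n. x i = 0" "\<forall>i<Suc n. x i \<in> \<int>" "ip (Suc n) x x = 2" "(\<Sum>i<Suc n. x i) = 0"
      by (auto simp: roots_def latA_def lessThan_Suc_atMost)
    then obtain i j s t where h: "i < j" "j < Suc n" "s \<in> {-1,1}" "t \<in> {-1,1}" "x = dv i j s t" "(\<Sum>i<Suc n. x i) = 0"
      using int_norm2 by metis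
    then have "s + t = 0" using sum_dv[of i "Suc n" j s t] by auto
    then have "(s, t) \<in> {(1,-1),(-1,1)}" using h by auto
    then show "x \<in> dvp ` Apar (Suc n)"
      using h by (intro image_eqI[of _ _ "((i,j),(s,t))"]) (auto simp: dvp_def Apar_def pairs_def)
  qed
  show "dvp ` Apar (Suc n) \<subseteq> roots (Suc n) (latA n)"
  proof
    fix x assume "x \<in> dvp ` Apar (Suc n)"
    then obtain i j s t where h: "i < j" "j < Suc n" "(s,t) \<in> {(1,-1),(-1,1)}" "x = dv i j s t"
      by (auto simp: dvp_def Apar_def pairs_def)
    have "(\<Sum>k\<le>n. x k) = 0" using h sum_dv[of i "Suc n" j s t] by (auto simp: lessThan_Suc_atMost)
    moreover have "\<forall>k>n. x k = 0" "\<forall>k\<le>n. x k \<in> \<int>" using h by (auto simp: dv_def)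
    moreover have "ip (Suc n) x x = 2" using h ip_dv_self[of i "Suc n" j s t] by auto
    ultimately show "x \<in> roots (Suc n) (latA n)" by (auto simp: roots_def latA_def)
  qed
qed




definition SL :: "real list list" where
  "SL = filter (\<lambda>l. sum_list l \<in> {-8,-4,0,4,8}) (List.n_lists 8 [1, -1])"
definition SL7 :: "real list list" where "SL7 = filter (\<lambda>l. l!6 = l!7) SL"
definition SL6 :: "real list list" where "SL6 = filter (\<lambda>l. l!5 = l!6 \<and> l!6 = l!7) SL"

lemma SL_eq: "SL = [[1, 1, 1, 1, 1, 1, 1, 1],
 [-1, -1, 1, 1, 1, 1, 1, 1],
 [-1, 1, -1, 1, 1, 1, 1, 1],
 [1, -1, -1, 1, 1, 1, 1, 1],
 [-1, 1, 1, -1, 1, 1, 1, 1],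
 [1, -1, 1, -1, 1, 1, 1, 1],
 [1, 1, -1, -1, 1, 1, 1, 1],
 [-1, -1, -1, -1, 1, 1, 1, 1],
 [-1, 1, 1, 1, -1, 1, 1, 1],
 [1, -1, 1, 1, -1, 1, 1, 1],
 [1, 1, -1, 1, -1, 1, 1, 1],
 [-1, -1, -1, 1, -1, 1, 1, 1],
 [1, 1, 1, -1, -1, 1, 1, 1],
 [-1, -1, 1, -1, -1, 1, 1, 1],
 [-1, 1, -1, -1, -1, 1, 1, 1],
 [1, -1, -1, -1, -1, 1, 1, 1],
 [-1, 1, 1, 1, 1, -1, 1, 1],
 [1, -1, 1, 1, 1, -1, 1, 1],
 [1, 1, -1, 1, 1, -1, 1, 1],
 [-1, -1, -1, 1, 1, -1, 1, 1],
 [1, 1, 1, -1, 1, -1, 1, 1],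
 [-1, -1, 1, -1, 1, -1, 1, 1],
 [-1, 1, -1, -1, 1, -1, 1, 1],
 [1, -1, -1, -1, 1, -1, 1, 1],
 [1, 1, 1, 1, -1, -1, 1, 1],
 [-1, -1, 1, 1, -1, -1, 1, 1],
 [-1, 1, -1, 1, -1, -1, 1, 1],
 [1, -1, -1, 1, -1, -1, 1, 1],
 [-1, 1, 1, -1, -1, -1, 1, 1],
 [1, -1, 1, -1, -1, -1, 1, 1],
 [1, 1, -1, -1, -1, -1, 1, 1],
 [-1, -1, -1, -1, -1, -1, 1, 1],
 [-1, 1, 1, 1, 1, 1, -1, 1],
 [1, -1, 1, 1, 1, 1, -1, 1],
 [1, 1, -1, 1, 1, 1, -1, 1],
 [-1, -1, -1, 1, 1, 1, -1, 1],
 [1, 1, 1, -1, 1, 1, -1, 1],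
 [-1, -1, 1, -1, 1, 1, -1, 1],
 [-1, 1, -1, -1, 1, 1, -1, 1],
 [1, -1, -1, -1, 1, 1, -1, 1],
 [1, 1, 1, 1, -1, 1, -1, 1],
 [-1, -1, 1, 1, -1, 1, -1, 1],
 [-1, 1, -1, 1, -1, 1, -1, 1],
 [1, -1, -1, 1, -1, 1, -1, 1],
 [-1, 1, 1, -1, -1, 1, -1, 1],
 [1, -1, 1, -1, -1, 1, -1, 1],
 [1, 1, -1, -1, -1, 1, -1, 1],
 [-1, -1, -1, -1, -1, 1, -1, 1],
 [1, 1, 1, 1, 1, -1, -1, 1],
 [-1, -1, 1, 1, 1, -1, -1, 1],
 [-1, 1, -1, 1, 1, -1, -1, 1],
 [1, -1, -1, 1, 1, -1, -1, 1],
 [-1, 1, 1, -1, 1, -1, -1, 1],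
 [1, -1, 1, -1, 1, -1, -1, 1],
 [1, 1, -1, -1, 1, -1, -1, 1],
 [-1, -1, -1, -1, 1, -1, -1, 1],
 [-1, 1, 1, 1, -1, -1, -1, 1],
 [1, -1, 1, 1, -1, -1, -1, 1],
 [1, 1, -1, 1, -1, -1, -1, 1],
 [-1, -1, -1, 1, -1, -1, -1, 1],
 [1, 1, 1, -1, -1, -1, -1, 1],
 [-1, -1, 1, -1, -1, -1, -1, 1],
 [-1, 1, -1, -1, -1, -1, -1, 1],
 [1, -1, -1, -1, -1, -1, -1, 1],
 [-1, 1, 1, 1, 1, 1, 1, -1],
 [1, -1, 1, 1, 1, 1, 1, -1],
 [1, 1, -1, 1, 1, 1, 1, -1],
 [-1, -1, -1, 1, 1, 1, 1, -1],
 [1, 1, 1, -1, 1, 1, 1, -1],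
 [-1, -1, 1, -1, 1, 1, 1, -1],
 [-1, 1, -1, -1, 1, 1, 1, -1],
 [1, -1, -1, -1, 1, 1, 1, -1],
 [1, 1, 1, 1, -1, 1, 1, -1],
 [-1, -1, 1, 1, -1, 1, 1, -1],
 [-1, 1, -1, 1, -1, 1, 1, -1],
 [1, -1, -1, 1, -1, 1, 1, -1],
 [-1, 1, 1, -1, -1, 1, 1, -1],
 [1, -1, 1, -1, -1, 1, 1, -1],
 [1, 1, -1, -1, -1, 1, 1, -1],
 [-1, -1, -1, -1, -1, 1, 1, -1],
 [1, 1, 1, 1, 1, -1, 1, -1],
 [-1, -1, 1, 1, 1, -1, 1, -1],
 [-1, 1, -1, 1, 1, -1, 1, -1],
 [1, -1, -1, 1, 1, -1, 1, -1],
 [-1, 1, 1, -1, 1, -1, 1, -1],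
 [1, -1, 1, -1, 1, -1, 1, -1],
 [1, 1, -1, -1, 1, -1, 1, -1],
 [-1, -1, -1, -1, 1, -1, 1, -1],
 [-1, 1, 1, 1, -1, -1, 1, -1],
 [1, -1, 1, 1, -1, -1, 1, -1],
 [1, 1, -1, 1, -1, -1, 1, -1],
 [-1, -1, -1, 1, -1, -1, 1, -1],
 [1, 1, 1, -1, -1, -1, 1, -1],
 [-1, -1, 1, -1, -1, -1, 1, -1],
 [-1, 1, -1, -1, -1, -1, 1, -1],
 [1, -1, -1, -1, -1, -1, 1, -1],
 [1, 1, 1, 1, 1, 1, -1, -1],
 [-1, -1, 1, 1, 1, 1, -1, -1],
 [-1, 1, -1, 1, 1, 1, -1, -1],
 [1, -1, -1, 1, 1, 1, -1, -1],
 [-1, 1, 1, -1, 1, 1, -1, -1],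
 [1, -1, 1, -1, 1, 1, -1, -1],
 [1, 1, -1, -1, 1, 1, -1, -1],
 [-1, -1, -1, -1, 1, 1, -1, -1],
 [-1, 1, 1, 1, -1, 1, -1, -1],
 [1, -1, 1, 1, -1, 1, -1, -1],
 [1, 1, -1, 1, -1, 1, -1, -1],
 [-1, -1, -1, 1, -1, 1, -1, -1],
 [1, 1, 1, -1, -1, 1, -1, -1],
 [-1, -1, 1, -1, -1, 1, -1, -1],
 [-1, 1, -1, -1, -1, 1, -1, -1],
 [1, -1, -1, -1, -1, 1, -1, -1],
 [-1, 1, 1, 1, 1, -1, -1, -1],
 [1, -1, 1, 1, 1, -1, -1, -1],
 [1, 1, -1, 1, 1, -1, -1, -1],
 [-1, -1, -1, 1, 1, -1, -1, -1],
 [1, 1, 1, -1, 1, -1, -1, -1],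
 [-1, -1, 1, -1, 1, -1, -1, -1],
 [-1, 1, -1, -1, 1, -1, -1, -1],
 [1, -1, -1, -1, 1, -1, -1, -1],
 [1, 1, 1, 1, -1, -1, -1, -1],
 [-1, -1, 1, 1, -1, -1, -1, -1],
 [-1, 1, -1, 1, -1, -1, -1, -1],
 [1, -1, -1, 1, -1, -1, -1, -1],
 [-1, 1, 1, -1, -1, -1, -1, -1],
 [1, -1, 1, -1, -1, -1, -1, -1],
 [1, 1, -1, -1, -1, -1, -1, -1],
 [-1, -1, -1, -1, -1, -1, -1, -1]]"
  by (simp add: SL_def eval_nat_numeral)
lemma SL7_eq: "SL7 = [[1, 1, 1, 1, 1, 1, 1, 1],
 [-1, -1, 1, 1, 1, 1, 1, 1],
 [-1, 1, -1, 1, 1, 1, 1, 1],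
 [1, -1, -1, 1, 1, 1, 1, 1],
 [-1, 1, 1, -1, 1, 1, 1, 1],
 [1, -1, 1, -1, 1, 1, 1, 1],
 [1, 1, -1, -1, 1, 1, 1, 1],
 [-1, -1, -1, -1, 1, 1, 1, 1],
 [-1, 1, 1, 1, -1, 1, 1, 1],
 [1, -1, 1, 1, -1, 1, 1, 1],
 [1, 1, -1, 1, -1, 1, 1, 1],
 [-1, -1, -1, 1, -1, 1, 1, 1],
 [1, 1, 1, -1, -1, 1, 1, 1],
 [-1, -1, 1, -1, -1, 1, 1, 1],
 [-1, 1, -1, -1, -1, 1, 1, 1],
 [1, -1, -1, -1, -1, 1, 1, 1],
 [-1, 1, 1, 1, 1, -1, 1, 1],
 [1, -1, 1, 1, 1, -1, 1, 1],
 [1, 1, -1, 1, 1, -1, 1, 1],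
 [-1, -1, -1, 1, 1, -1, 1, 1],
 [1, 1, 1, -1, 1, -1, 1, 1],
 [-1, -1, 1, -1, 1, -1, 1, 1],
 [-1, 1, -1, -1, 1, -1, 1, 1],
 [1, -1, -1, -1, 1, -1, 1, 1],
 [1, 1, 1, 1, -1, -1, 1, 1],
 [-1, -1, 1, 1, -1, -1, 1, 1],
 [-1, 1, -1, 1, -1, -1, 1, 1],
 [1, -1, -1, 1, -1, -1, 1, 1],
 [-1, 1, 1, -1, -1, -1, 1, 1],
 [1, -1, 1, -1, -1, -1, 1, 1],
 [1, 1, -1, -1, -1, -1, 1, 1],
 [-1, -1, -1, -1, -1, -1, 1, 1],
 [1, 1, 1, 1, 1, 1, -1, -1],
 [-1, -1, 1, 1, 1, 1, -1, -1],
 [-1, 1, -1, 1, 1, 1, -1, -1],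
 [1, -1, -1, 1, 1, 1, -1, -1],
 [-1, 1, 1, -1, 1, 1, -1, -1],
 [1, -1, 1, -1, 1, 1, -1, -1],
 [1, 1, -1, -1, 1, 1, -1, -1],
 [-1, -1, -1, -1, 1, 1, -1, -1],
 [-1, 1, 1, 1, -1, 1, -1, -1],
 [1, -1, 1, 1, -1, 1, -1, -1],
 [1, 1, -1, 1, -1, 1, -1, -1],
 [-1, -1, -1, 1, -1, 1, -1, -1],
 [1, 1, 1, -1, -1, 1, -1, -1],
 [-1, -1, 1, -1, -1, 1, -1, -1],
 [-1, 1, -1, -1, -1, 1, -1, -1],
 [1, -1, -1, -1, -1, 1, -1, -1],
 [-1, 1, 1, 1, 1, -1, -1, -1],
 [1, -1, 1, 1, 1, -1, -1, -1],
 [1, 1, -1, 1, 1, -1, -1, -1],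
 [-1, -1, -1, 1, 1, -1, -1, -1],
 [1, 1, 1, -1, 1, -1, -1, -1],
 [-1, -1, 1, -1, 1, -1, -1, -1],
 [-1, 1, -1, -1, 1, -1, -1, -1],
 [1, -1, -1, -1, 1, -1, -1, -1],
 [1, 1, 1, 1, -1, -1, -1, -1],
 [-1, -1, 1, 1, -1, -1, -1, -1],
 [-1, 1, -1, 1, -1, -1, -1, -1],
 [1, -1, -1, 1, -1, -1, -1, -1],
 [-1, 1, 1, -1, -1, -1, -1, -1],
 [1, -1, 1, -1, -1, -1, -1, -1],
 [1, 1, -1, -1, -1, -1, -1, -1],
 [-1, -1, -1, -1, -1, -1, -1, -1]]"
  by (simp add: SL7_def SL_eq)
lemma SL6_eq: "SL6 = [[1, 1, 1, 1, 1, 1, 1, 1],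
 [-1, -1, 1, 1, 1, 1, 1, 1],
 [-1, 1, -1, 1, 1, 1, 1, 1],
 [1, -1, -1, 1, 1, 1, 1, 1],
 [-1, 1, 1, -1, 1, 1, 1, 1],
 [1, -1, 1, -1, 1, 1, 1, 1],
 [1, 1, -1, -1, 1, 1, 1, 1],
 [-1, -1, -1, -1, 1, 1, 1, 1],
 [-1, 1, 1, 1, -1, 1, 1, 1],
 [1, -1, 1, 1, -1, 1, 1, 1],
 [1, 1, -1, 1, -1, 1, 1, 1],
 [-1, -1, -1, 1, -1, 1, 1, 1],
 [1, 1, 1, -1, -1, 1, 1, 1],
 [-1, -1, 1, -1, -1, 1, 1, 1],
 [-1, 1, -1, -1, -1, 1, 1, 1],
 [1, -1, -1, -1, -1, 1, 1, 1],
 [-1, 1, 1, 1, 1, -1, -1, -1],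
 [1, -1, 1, 1, 1, -1, -1, -1],
 [1, 1, -1, 1, 1, -1, -1, -1],
 [-1, -1, -1, 1, 1, -1, -1, -1],
 [1, 1, 1, -1, 1, -1, -1, -1],
 [-1, -1, 1, -1, 1, -1, -1, -1],
 [-1, 1, -1, -1, 1, -1, -1, -1],
 [1, -1, -1, -1, 1, -1, -1, -1],
 [1, 1, 1, 1, -1, -1, -1, -1],
 [-1, -1, 1, 1, -1, -1, -1, -1],
 [-1, 1, -1, 1, -1, -1, -1, -1],
 [1, -1, -1, 1, -1, -1, -1, -1],
 [-1, 1, 1, -1, -1, -1, -1, -1],
 [1, -1, 1, -1, -1, -1, -1, -1],
 [1, 1, -1, -1, -1, -1, -1, -1],
 [-1, -1, -1, -1, -1, -1, -1, -1]]"
  by (simp add: SL6_def SL_eq)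

lemma less8_cases: "(i::nat) < 8 \<Longrightarrow> i = 0 \<or> i = 1 \<or> i = 2 \<or> i = 3 \<or> i = 4 \<or> i = 5 \<or> i = 6 \<or> i = 7"
  by auto

lemma gram8: "i < 8 \<Longrightarrow> j < 8 \<Longrightarrow> sum_list (map (\<lambda>l. l!i * l!j) SL) = (if i = j then 128 else 0)"
  by (elim less8_cases[elim_format] disjE) (simp_all add: SL_eq)
lemma gram7: "i < 8 \<Longrightarrow> j < 8 \<Longrightarrow> sum_list (map (\<lambda>l. l!i * l!j) SL7) =
   (if i = j then 64 else if i \<in> {6,7} \<and> j \<in> {6,7} then 64 else 0)"
  by (elim less8_cases[elim_format] disjE) (simp_all add: SL7_eq)
lemma gram6: "i < 8 \<Longrightarrow> j < 8 \<Longrightarrow> sum_list (map (\<lambda>l. l!i * l!j) SL6) =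
   (if i = j then 32 else if i \<in> {5,6,7} \<and> j \<in> {5,6,7} then 32 else 0)"
  by (elim less8_cases[elim_format] disjE) (simp_all add: SL6_eq)

lemma set_SL: "l \<in> set SL \<longleftrightarrow> length l = 8 \<and> set l \<subseteq> {1,-1} \<and> sum_list l \<in> {-8,-4,0,4,8}"
  by (auto simp: SL_def set_n_lists)

lemma distinct_SL: "distinct SL"
  unfolding SL_def by (intro distinct_filter distinct_n_lists) simp

lemma distinct_SL7: "distinct SL7" using distinct_SL by (simp add: SL7_def)
lemma distinct_SL6: "distinct SL6" using distinct_SL by (simp add: SL6_def)
lemma set_SL7: "set SL7 \<subseteq> set SL" by (auto simp: SL7_def)
lemma set_SL6: "set SL6 \<subseteq> set SL" by (auto simp: SL6_def)

definition hf :: "real list \<Rightarrow> vec" where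
  "hf l = (\<lambda>i. if i < length l then l ! i / 2 else 0)"

lemma inj_hf: "inj_on hf (set SL)"
proof (rule inj_onI)
  fix l l' assume l: "l \<in> set SL" and l': "l' \<in> set SL" and e: "hf l = hf l'"
  have len: "length l = 8" "length l' = 8" using l l' by (auto simp: set_SL)
  show "l = l'"
  proof (rule nth_equalityI)
    show "length l = length l'" using len by simp
    fix i assume "i < length l"
    then show "l ! i = l' ! i" using fun_cong[OF e, of i] len by (simp add: hf_def)
  qed
qed

lemma sum8_list: "length l = 8 \<Longrightarrow> sum_list l = (\<Sum>i<8. l ! i)"
  by (simp add: sum_list_sum_nth atLeast0LessThan)

lemma roots_half: "{x \<in> halfE. ip 8 x x = 2} = hf ` set SL"
proof
  show "{x \<in> halfE. ip 8 x x = 2} \<subseteq> hf ` set SL"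
  proof
    fix x assume x: "x \<in> {x \<in> halfE. ip 8 x x = 2}"
    have pm: "\<forall>i<8. x i = 1/2 \<or> x i = -1/2"
      using x half_norm2 by (auto simp: halfE_def)
    have sup: "\<forall>i\<ge>8. x i = 0" using x by (auto simp: halfE_def)
    obtain z :: int where z: "(\<Sum>i<8. x i) = 2 * of_int z" using x by (auto simp: halfE_def)
    define l where "l = map (\<lambda>i. 2 * x i) [0..<8]"
    have len: "length l = 8" by (simp add: l_def)
    have nth: "\<And>i. i < 8 \<Longrightarrow> l ! i = 2 * x i" by (simp add: l_def)
    have "set l \<subseteq> {1,-1}" using pm by (auto simp: l_def)
    moreover have sl: "sum_list l = 4 * of_int z"
    proof -
      have "sum_list l = (\<Sum>i<8. 2 * x i)" using len nth by (simp add: sum8_list)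
      also have "\<dots> = 4 * of_int z" using z by (simp add: sum_distrib_left[symmetric])
      finally show ?thesis .
    qed
    moreover have "sum_list l \<in> {-8,-4,0,4,8}"
    proof -
      have "(\<Sum>i<8. x i) \<le> (\<Sum>i<(8::nat). 1/2)" by (rule sum_mono) (use pm in force)
      moreover have "(\<Sum>i<(8::nat). -1/2) \<le> (\<Sum>i<8. x i)" by (rule sum_mono) (use pm in force)
      ultimately have "-2 \<le> z" "z \<le> 2" using z by auto
      then have "z = -2 \<or> z = -1 \<or> z = 0 \<or> z = 1 \<or> z = 2" by auto
      then show ?thesis using sl by auto
    qed
    ultimately have "l \<in> set SL" using len by (simp add: set_SL)
    moreover have "hf l = x"
    proof
      fix i show "hf l i = x i" using nth sup len by (cases "i < 8") (auto simp: hf_def)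
    qed
    ultimately show "x \<in> hf ` set SL" by blast
  qed
  show "hf ` set SL \<subseteq> {x \<in> halfE. ip 8 x x = 2}"
  proof
    fix x assume "x \<in> hf ` set SL"
    then obtain l where l: "l \<in> set SL" "x = hf l" by blast
    have len: "length l = 8" and sl: "set l \<subseteq> {1,-1}" and ss: "sum_list l \<in> {-8,-4,0,4,8}"
      using l by (auto simp: set_SL)
    have pm: "l ! i = 1 \<or> l ! i = -1" if i: "i < 8" for i
    proof -
      have "l ! i \<in> set l" using i len by simp
      then have "l ! i \<in> {1,-1}" using sl by blast
      then show ?thesis by simp
    qed
    have "\<forall>i\<ge>8. x i = 0" using l len by (simp add: hf_def)
    moreover have "\<forall>i<8. x i - 1/2 \<in> \<int>"
    proof (intro allI impI)
      fix i :: nat assume i: "i < 8"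
      then have "x i = l ! i / 2" using l len by (simp add: hf_def)
      then have "x i - 1/2 = 0 \<or> x i - 1/2 = -1" using pm[OF i] by auto
      then show "x i - 1/2 \<in> \<int>" by (metis Ints_0 Ints_1 Ints_minus)
    qed
    moreover have "\<exists>z::int. (\<Sum>i<8. x i) = 2 * of_int z"
    proof -
      have "(\<Sum>i<8. x i) = (\<Sum>i<8. l ! i) / 2" using l len by (simp add: hf_def sum_divide_distrib)
      also have "\<dots> = sum_list l / 2" using len by (simp add: sum8_list)
      finally have e: "(\<Sum>i<8. x i) = sum_list l / 2" .
      have "sum_list l / 2 = 2 * of_int (-2::int) \<or> sum_list l / 2 = 2 * of_int (-1::int) \<or>
            sum_list l / 2 = 2 * of_int (0::int) \<or> sum_list l / 2 = 2 * of_int (1::int) \<or>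
            sum_list l / 2 = 2 * of_int (2::int)" using ss by auto
      then show ?thesis unfolding e by blast
    qed
    moreover have "ip 8 x x = 2"
    proof -
      have "ip 8 x x = (\<Sum>i<(8::nat). 1/4)"
        unfolding ip_def
      proof (rule sum.cong)
        fix i assume i: "i \<in> {..<8::nat}"
        then have "l ! i = 1 \<or> l ! i = -1" using pm by simp
        moreover have "x i = l ! i / 2" using l len i by (simp add: hf_def)
        ultimately have "x i = 1/2 \<or> x i = -1/2" by auto
        then show "x i * x i = 1/4"
        proof
          assume h: "x i = 1/2" show ?thesis unfolding h by simp
        next
          assume h: "x i = -1/2" show ?thesis unfolding h by simp
        qed
      qed simp
      then show ?thesis by simp
    qed
    ultimately show "x \<in> {x \<in> halfE. ip 8 x x = 2}" by (simp add: halfE_def)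
  qed
qed

lemma half_sum:
  assumes L: "set L \<subseteq> set SL" "distinct L"
  shows "(\<Sum>x\<in>hf ` set L. (ip 8 x y)^2) = (\<Sum>i<8. \<Sum>j<8. y i * y j * sum_list (map (\<lambda>l. l!i * l!j) L)) / 4"
proof -
  have inj: "inj_on hf (set L)" using inj_on_subset[OF inj_hf L(1)] .
  have len: "\<And>l. l \<in> set L \<Longrightarrow> length l = 8" using L(1) by (auto simp: set_SL)
  have "(\<Sum>x\<in>hf ` set L. (ip 8 x y)^2) = (\<Sum>l\<in>set L. (ip 8 (hf l) y)^2)"
    using inj by (simp add: sum.reindex)
  also have "\<dots> = (\<Sum>l\<in>set L. (\<Sum>i<8. \<Sum>j<8. (l!i * y i) * (l!j * y j)) / 4)"
  proof (rule sum.cong)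
    fix l assume l: "l \<in> set L"
    have e: "ip 8 (hf l) y = (\<Sum>i<8. l!i * y i) / 2"
      unfolding ip_def using len[OF l] by (simp add: hf_def sum_divide_distrib)
    have "(ip 8 (hf l) y)^2 = (\<Sum>i<8. l!i * y i) * (\<Sum>j<8. l!j * y j) / 4"
      unfolding e by (simp add: power2_eq_square)
    then show "(ip 8 (hf l) y)^2 = (\<Sum>i<8. \<Sum>j<8. (l!i * y i) * (l!j * y j)) / 4"
      by (simp only: sum_product)
  qed simp
  also have "\<dots> = (\<Sum>i<8. \<Sum>j<8. \<Sum>l\<in>set L. (l!i * y i) * (l!j * y j)) / 4"
    by (simp add: sum_divide_distrib[symmetric] sum.swap[of _ "set L"])
  also have "\<dots> = (\<Sum>i<8. \<Sum>j<8. y i * y j * sum_list (map (\<lambda>l. l!i * l!j) L)) / 4"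
    using L(2) by (simp add: sum_list_distinct_conv_sum_set sum_distrib_left mult_ac)
  finally show ?thesis .
qed




lemma span_lin:
  assumes "\<forall>r\<in>R. (\<Sum>i\<in>I. w i * r i) = 0" "in_span R x"
  shows "(\<Sum>i\<in>I. w i * x i) = 0"
proof -
  obtain S c where S: "finite S" "S \<subseteq> R" "x = (\<lambda>i. \<Sum>r\<in>S. c r * r i)"
    using assms(2) by (auto simp: in_span_def)
  have "(\<Sum>i\<in>I. w i * x i) = (\<Sum>i\<in>I. \<Sum>r\<in>S. c r * (w i * r i))"
    unfolding S(3) by (simp add: sum_distrib_left mult_ac)
  also have "\<dots> = (\<Sum>r\<in>S. c r * (\<Sum>i\<in>I. w i * r i))"
    by (subst sum.swap) (simp add: sum_distrib_left)
  also have "\<dots> = 0" using assms(1) S(2) by (auto intro!: sum.neutral)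
  finally show ?thesis .
qed

lemma coset_lin:
  assumes "\<forall>r\<in>R. (\<Sum>i\<in>I. w i * r i) = 0" "g \<in> dual m R" "c \<in> coset g R"
  shows "(\<Sum>i\<in>I. w i * c i) = 0"
proof -
  obtain r where r: "r \<in> R" "c = (\<lambda>i. g i + r i)" using assms(3) by (auto simp: coset_def)
  have "(\<Sum>i\<in>I. w i * g i) = 0" using span_lin[OF assms(1)] assms(2) by (auto simp: dual_def)
  moreover have "(\<Sum>i\<in>I. w i * r i) = 0" using assms(1) r(1) by blast
  ultimately show ?thesis using r(2) by (simp add: distrib_left sum.distrib)
qed

lemma sum8: "(\<Sum>i<(8::nat). f i) = f 0 + f 1 + f 2 + f 3 + f 4 + f 5 + f 6 + (f 7 :: real)"
  by (simp add: eval_nat_numeral)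
lemma sum6: "(\<Sum>i<(6::nat). f i) = f 0 + f 1 + f 2 + f 3 + f 4 + (f 5 :: real)"
  by (simp add: eval_nat_numeral)
lemma sum5: "(\<Sum>i<(5::nat). f i) = f 0 + f 1 + f 2 + f 3 + (f 4 :: real)"
  by (simp add: eval_nat_numeral)

lemma dv_vals: "s \<in> {-1,1} \<Longrightarrow> t \<in> {-1,1} \<Longrightarrow> dv i j s t k \<in> {-2,-1,0,1,2}"
  by (auto simp: dv_def)

lemma hf_vals: "l \<in> set SL \<Longrightarrow> hf l 0 \<in> {1/2, -1/2}"
proof -
  assume l: "l \<in> set SL"
  then have len: "length l = 8" and sl: "set l \<subseteq> {1,-1}" by (auto simp: set_SL)
  have "l ! 0 \<in> set l" using len by simp
  then have "l ! 0 \<in> {1,-1}" using sl by blast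
  then show ?thesis using len by (auto simp: hf_def)
qed

lemma disj_DH: "P \<subseteq> Dpar 8 \<Longrightarrow> L \<subseteq> set SL \<Longrightarrow> dvp ` P \<inter> hf ` L = {}"
proof (rule ccontr)
  assume P: "P \<subseteq> Dpar 8" and L: "L \<subseteq> set SL" and "dvp ` P \<inter> hf ` L \<noteq> {}"
  then obtain p l where p: "p \<in> P" and l: "l \<in> L" and e: "dvp p = hf l" by blast
  obtain i j s t where pp: "p = ((i,j),(s,t))" by (metis prod.collapse)
  have "s \<in> {-1,1}" "t \<in> {-1,1}" using p P pp by (auto simp: Dpar_def)
  then have "dvp p 0 \<in> {-2,-1,0,1,2}" using dv_vals pp by (simp add: dvp_def)
  moreover have "hf l 0 \<in> {1/2, -1/2}" using hf_vals l L by blast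
  ultimately show False using e by auto
qed

lemma rootsE8: "roots 8 latE8 = dvp ` Dpar 8 \<union> hf ` set SL"
proof -
  have "roots 8 latE8 = roots 8 (latD 8) \<union> {x \<in> halfE. ip 8 x x = 2}"
    by (auto simp: roots_def latE8_alt)
  then show ?thesis by (simp add: rootsD roots_half)
qed

definition D7par :: "((nat \<times> nat) \<times> (real \<times> real)) set" where
  "D7par = Dpar 6 \<union> {((6,7),(1,1)),((6,7),(-1,-1))}"

lemma D7par_sub: "D7par \<subseteq> Dpar 8" by (auto simp: D7par_def Dpar_def pairs_def)

lemma D7_char: "p \<in> Dpar 8 \<Longrightarrow> dvp p 6 = dvp p 7 \<longleftrightarrow> p \<in> D7par"
proof -
  assume p: "p \<in> Dpar 8"
  obtain i j s t where pp: "p = ((i,j),(s,t))" by (metis prod.collapse)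
  have h: "i < j" "j < 8" "s \<in> {-1,1}" "t \<in> {-1,1}" using p pp by (auto simp: Dpar_def pairs_def)
  show ?thesis
  proof (cases "j < 6")
    case True then show ?thesis using h pp by (auto simp: dvp_def dv_def D7par_def Dpar_def pairs_def)
  next
    case False
    then have "j = 6 \<or> j = 7" using h by auto
    then show ?thesis using h pp by (auto simp: dvp_def dv_def D7par_def Dpar_def pairs_def)
  qed
qed

lemma D6_char: "p \<in> Dpar 8 \<Longrightarrow> (dvp p 5 = dvp p 6 \<and> dvp p 6 = dvp p 7) \<longleftrightarrow> p \<in> Dpar 5"
proof -
  assume p: "p \<in> Dpar 8"
  obtain i j s t where pp: "p = ((i,j),(s,t))" by (metis prod.collapse)
  have h: "i < j" "j < 8" "s \<in> {-1,1}" "t \<in> {-1,1}" using p pp by (auto simp: Dpar_def pairs_def)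
  show ?thesis
  proof (cases "j < 5")
    case True then show ?thesis using h pp by (auto simp: dvp_def dv_def Dpar_def pairs_def)
  next
    case False
    then have "j = 5 \<or> j = 6 \<or> j = 7" using h by auto
    then show ?thesis using h pp by (auto simp: dvp_def dv_def Dpar_def pairs_def)
  qed
qed

lemma hf_nth: "l \<in> set SL \<Longrightarrow> i < 8 \<Longrightarrow> hf l i = l ! i / 2"
  by (auto simp: hf_def set_SL)

lemma rootsE7: "roots 8 latE7 = dvp ` D7par \<union> hf ` set SL7"
proof -
  have "roots 8 latE7 = {x \<in> roots 8 latE8. x 6 = x 7}"
    by (auto simp: roots_def latE7_def)
  also have "\<dots> = {x \<in> dvp ` Dpar 8. x 6 = x 7} \<union> {x \<in> hf ` set SL. x 6 = x 7}"
    unfolding rootsE8 by auto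
  also have "{x \<in> dvp ` Dpar 8. x 6 = x 7} = dvp ` D7par"
    using D7_char D7par_sub by blast
  also have "{x \<in> hf ` set SL. x 6 = x 7} = hf ` set SL7"
    by (auto simp: SL7_def hf_nth)
  finally show ?thesis .
qed

lemma D5_sub: "Dpar 5 \<subseteq> Dpar 8" by (auto simp: Dpar_def pairs_def)

lemma rootsE6: "roots 8 latE6 = dvp ` Dpar 5 \<union> hf ` set SL6"
proof -
  have "roots 8 latE6 = {x \<in> roots 8 latE8. x 5 = x 6 \<and> x 6 = x 7}"
    by (auto simp: roots_def latE6_def)
  also have "\<dots> = {x \<in> dvp ` Dpar 8. x 5 = x 6 \<and> x 6 = x 7} \<union> {x \<in> hf ` set SL. x 5 = x 6 \<and> x 6 = x 7}"
    unfolding rootsE8 by auto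
  also have "{x \<in> dvp ` Dpar 8. x 5 = x 6 \<and> x 6 = x 7} = dvp ` Dpar 5"
    using D6_char D5_sub by blast
  also have "{x \<in> hf ` set SL. x 5 = x 6 \<and> x 6 = x 7} = hf ` set SL6"
    by (auto simp: SL6_def hf_nth)
  finally show ?thesis .
qed

lemma sum_DH:
  assumes "P \<subseteq> Dpar 8" "set L \<subseteq> set SL" "distinct L"
  shows "(\<Sum>x\<in>dvp ` P \<union> hf ` set L. (ip 8 x y)^2) =
     (\<Sum>p\<in>P. (ip 8 (dvp p) y)^2) + (\<Sum>i<8. \<Sum>j<8. y i * y j * sum_list (map (\<lambda>l. l!i * l!j) L)) / 4"
proof -
  have fP: "finite P" using finite_subset[OF assms(1) finite_Dpar] .
  have inj: "inj_on dvp P" using inj_on_subset[OF inj_Dpar assms(1)] .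
  have "(\<Sum>x\<in>dvp ` P \<union> hf ` set L. (ip 8 x y)^2) = (\<Sum>x\<in>dvp ` P. (ip 8 x y)^2) + (\<Sum>x\<in>hf ` set L. (ip 8 x y)^2)"
    using fP disj_DH[OF assms(1,2)] by (simp add: sum.union_disjoint)
  also have "(\<Sum>x\<in>dvp ` P. (ip 8 x y)^2) = (\<Sum>p\<in>P. (ip 8 (dvp p) y)^2)"
    using inj by (simp add: sum.reindex)
  finally show ?thesis using half_sum[OF assms(2,3)] by simp
qed

lemma gsum8: "(\<Sum>i<8. \<Sum>j<8. y i * y j * sum_list (map (\<lambda>l. l!i * l!j) SL)) =
   (\<Sum>i<8. \<Sum>j<8. y i * y j * (if i = j then 128 else 0))"
  by (intro sum.cong refl) (simp add: gram8)
lemma gsum7: "(\<Sum>i<8. \<Sum>j<8. y i * y j * sum_list (map (\<lambda>l. l!i * l!j) SL7)) =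
   (\<Sum>i<8. \<Sum>j<8. y i * y j * (if i = j then 64 else if i \<in> {6,7} \<and> j \<in> {6,7} then 64 else 0))"
  by (intro sum.cong refl) (simp add: gram7)
lemma gsum6: "(\<Sum>i<8. \<Sum>j<8. y i * y j * sum_list (map (\<lambda>l. l!i * l!j) SL6)) =
   (\<Sum>i<8. \<Sum>j<8. y i * y j * (if i = j then 32 else if i \<in> {5,6,7} \<and> j \<in> {5,6,7} then 32 else 0))"
  by (intro sum.cong refl) (simp add: gram6)

lemma sumE8: "(\<Sum>a\<in>roots 8 latE8. (ip 8 a y)^2) = 60 * ip 8 y y"
proof -
  have "(\<Sum>a\<in>roots 8 latE8. (ip 8 a y)^2) = 4 * 7 * (\<Sum>i<8. (y i)^2) + (\<Sum>i<8. \<Sum>j<8. y i * y j * (if i = j then 128 else 0)) / 4"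
    unfolding rootsE8 using sum_DH[of "Dpar 8" SL y] distinct_SL Dsum[of 8 8 y] gsum8[of y] by simp
  then show ?thesis by (simp add: sum8 ip_def power2_eq_square algebra_simps)
qed

lemma sumD7: "(\<Sum>p\<in>D7par. (ip 8 (dvp p) y)^2) = 4 * 5 * (\<Sum>i<6. (y i)^2) + 2 * (y 6 + y 7)^2"
proof -
  have d: "Dpar 6 \<inter> {((6,7),(1,1)),((6,7),(-1,-1))} = {}" by (auto simp: Dpar_def pairs_def)
  have "(\<Sum>p\<in>D7par. (ip 8 (dvp p) y)^2) = (\<Sum>p\<in>Dpar 6. (ip 8 (dvp p) y)^2) + (\<Sum>p\<in>{((6,7),(1::real,1::real)),((6,7),(-1,-1))}. (ip 8 (dvp p) y)^2)"
    unfolding D7par_def using d finite_Dpar by (simp add: sum.union_disjoint)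
  also have "(\<Sum>p\<in>{((6,7),(1::real,1::real)),((6,7),(-1,-1))}. (ip 8 (dvp p) y)^2) = 2 * (y 6 + y 7)^2"
    by (simp add: dvp_def ip_dv power2_eq_square algebra_simps)
  finally show ?thesis using Dsum[of 6 8 y] by simp
qed

lemma sumE7: "y 6 = y 7 \<Longrightarrow> (\<Sum>a\<in>roots 8 latE7. (ip 8 a y)^2) = 36 * ip 8 y y"
proof -
  assume c: "y 6 = y 7"
  have "(\<Sum>a\<in>roots 8 latE7. (ip 8 a y)^2) = 4 * 5 * (\<Sum>i<6. (y i)^2) + 2 * (y 6 + y 7)^2 +
     (\<Sum>i<8. \<Sum>j<8. y i * y j * (if i = j then 64 else if i \<in> {6,7} \<and> j \<in> {6,7} then 64 else 0)) / 4"
    unfolding rootsE7 using sum_DH[of D7par SL7 y] distinct_SL7 set_SL7 D7par_sub sumD7[of y] gsum7[of y] by simp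
  then show ?thesis using c by (simp add: sum8 sum6 ip_def power2_eq_square algebra_simps)
qed

lemma sumE6: "y 5 = y 6 \<Longrightarrow> y 6 = y 7 \<Longrightarrow> (\<Sum>a\<in>roots 8 latE6. (ip 8 a y)^2) = 24 * ip 8 y y"
proof -
  assume c: "y 5 = y 6" "y 6 = y 7"
  have "(\<Sum>a\<in>roots 8 latE6. (ip 8 a y)^2) = 4 * 4 * (\<Sum>i<5. (y i)^2) +
     (\<Sum>i<8. \<Sum>j<8. y i * y j * (if i = j then 32 else if i \<in> {5,6,7} \<and> j \<in> {5,6,7} then 32 else 0)) / 4"
    unfolding rootsE6 using sum_DH[of "Dpar 5" SL6 y] distinct_SL6 set_SL6 D5_sub Dsum[of 5 8 y] gsum6[of y] by simp
  then show ?thesis using c by (simp add: sum8 sum5 ip_def power2_eq_square algebra_simps)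
qed




lemma roots_finite: "adm T \<Longrightarrow> finite (roots (amb T) (lat T))"
  by (cases T) (simp_all add: rootsA[simplified] rootsD rootsE8 rootsE7 rootsE6 finite_Apar finite_Dpar
     D7par_def)

lemma root_sum: "adm T \<Longrightarrow> g \<in> dual (amb T) (lat T) \<Longrightarrow> c \<in> coset g (lat T) \<Longrightarrow>
   (\<Sum>a\<in>roots (amb T) (lat T). (ip (amb T) a c)^2) = 2 * real (cox T) * ip (amb T) c c"
proof (cases T)
  case (TA n)
  assume g: "g \<in> dual (amb T) (lat T)" and c: "c \<in> coset g (lat T)"
  have lin: "\<forall>r\<in>latA n. (\<Sum>i\<in>{..<Suc n}. 1 * r i) = 0" by (simp add: latA_def lessThan_Suc_atMost)
  have S: "(\<Sum>i<Suc n. c i) = 0" using coset_lin[OF lin, of g "Suc n" c] g c TA by simp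
  have "(\<Sum>a\<in>roots (Suc n) (latA n). (ip (Suc n) a c)^2) = (\<Sum>p\<in>Apar (Suc n). (ip (Suc n) (dvp p) c)^2)"
    unfolding rootsA using inj_Apar by (simp add: sum.reindex)
  also have "\<dots> = 2 * real (Suc n) * ip (Suc n) c c"
    unfolding Asum S by (simp add: ip_def power2_eq_square)
  finally show ?thesis using TA by simp
next
  case (TD n)
  assume "adm T"
  then have n: "n \<ge> 4" using TD by simp
  have "(\<Sum>a\<in>roots n (latD n). (ip n a c)^2) = (\<Sum>p\<in>Dpar n. (ip n (dvp p) c)^2)"
    unfolding rootsD using inj_Dpar by (simp add: sum.reindex)
  also have "\<dots> = 4 * (real n - 1) * (\<Sum>i<n. (c i)^2)" by (rule Dsum) simp
  also have "\<dots> = 2 * real (2 * n - 2) * ip n c c"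
    using n by (simp add: ip_def power2_eq_square of_nat_diff)
  finally show ?thesis using TD by simp
next
  case TE8
  then show ?thesis using sumE8[of c] by simp
next
  case TE7
  assume g: "g \<in> dual (amb T) (lat T)" and c: "c \<in> coset g (lat T)"
  have lin: "\<forall>r\<in>latE7. (\<Sum>i\<in>{6,7}. (if i = 6 then 1 else -1) * r i) = 0" by (simp add: latE7_def)
  have "(\<Sum>i\<in>{6::nat,7}. (if i = 6 then 1 else -1) * c i) = 0" using coset_lin[OF lin, of g 8 c] g c TE7 by simp
  then have "c 6 = c 7" by simp
  then show ?thesis using sumE7[of c] TE7 by simp
next
  case TE6
  assume g: "g \<in> dual (amb T) (lat T)" and c: "c \<in> coset g (lat T)"
  have lin1: "\<forall>r\<in>latE6. (\<Sum>i\<in>{5,6}. (if i = 5 then 1 else -1) * r i) = 0" by (simp add: latE6_def)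
  have lin2: "\<forall>r\<in>latE6. (\<Sum>i\<in>{6,7}. (if i = 6 then 1 else -1) * r i) = 0" by (simp add: latE6_def)
  have "(\<Sum>i\<in>{5::nat,6}. (if i = 5 then 1 else -1) * c i) = 0" using coset_lin[OF lin1, of g 8 c] g c TE6 by simp
  moreover have "(\<Sum>i\<in>{6::nat,7}. (if i = 6 then 1 else -1) * c i) = 0" using coset_lin[OF lin2, of g 8 c] g c TE6 by simp
  ultimately have "c 5 = c 6" "c 6 = c 7" by simp_all
  then show ?thesis using sumE6[of c] TE6 by simp
qed



lemma cox_pos: "adm T \<Longrightarrow> cox T > 0"
  by (cases T) auto

lemma posroots_half:
  assumes "adm T" "\<forall>a\<in>roots (amb T) (lat T). ip (amb T) a t \<noteq> 0"
  shows "(\<Sum>a\<in>posroots T t. (ip (amb T) a c)^2) = (\<Sum>a\<in>roots (amb T) (lat T). (ip (amb T) a c)^2) / 2"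
proof -
  define Phi where "Phi = roots (amb T) (lat T)"
  define m where "m = amb T"
  define P where "P = posroots T t"
  define N where "N = {a \<in> Phi. ip m a t < 0}"
  have fin: "finite Phi" using roots_finite[OF assms(1)] by (simp add: Phi_def)
  have negr: "\<And>a. a \<in> Phi \<Longrightarrow> (\<lambda>i. - a i) \<in> Phi"
    using lat_neg[OF assms(1)] by (auto simp: Phi_def roots_def ip_neg_left ip_neg_right)
  have PN: "Phi = P \<union> N" "P \<inter> N = {}"
    using assms(2) by (auto simp: Phi_def P_def N_def m_def posroots_def)
  have NP: "N = (\<lambda>a i. - a i) ` P"
  proof
    show "N \<subseteq> (\<lambda>a i. - a i) ` P"
    proof
      fix a assume a: "a \<in> N"
      have "(\<lambda>i. - a i) \<in> P" using a negr by (auto simp: N_def P_def posroots_def Phi_def m_def ip_neg_left)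
      then show "a \<in> (\<lambda>a i. - a i) ` P" by (rule rev_image_eqI) simp
    qed
    show "(\<lambda>a i. - a i) ` P \<subseteq> N"
      using negr by (auto simp: N_def P_def posroots_def Phi_def m_def ip_neg_left)
  qed
  have inj: "inj_on (\<lambda>a i. - a i) P" by (auto simp: inj_on_def fun_eq_iff)
  have finP: "finite P" "finite N" using fin PN by auto
  have "(\<Sum>a\<in>Phi. (ip m a c)^2) = (\<Sum>a\<in>P. (ip m a c)^2) + (\<Sum>a\<in>N. (ip m a c)^2)"
    using PN finP by (simp add: sum.union_disjoint)
  also have "(\<Sum>a\<in>N. (ip m a c)^2) = (\<Sum>a\<in>P. (ip m a c)^2)"
    unfolding NP using inj by (simp add: sum.reindex ip_neg_left)
  finally show ?thesis by (simp add: Phi_def P_def m_def)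
qed

theorem mainTheorem2:
  fixes T :: rtype and g t :: vec and k :: real
  assumes "adm T"
    and "g \<in> dual (amb T) (lat T)"
    and "\<forall>a\<in>roots (amb T) (lat T). ip (amb T) a t \<noteq> 0"
    and "\<exists>a\<in>coset g (lat T). ip (amb T) a a = k"
    and "\<forall>a\<in>coset g (lat T). k \<le> ip (amb T) a a"
  shows "(\<forall>j::int. j \<ge> 2 \<longrightarrow> smode T t j (vvec T g k) = (\<lambda>mu M. 0)
                          \<and> wtmode T t j (vvec T g k) = (\<lambda>mu M. 0))
       \<and> smode T t 1 (vvec T g k) = (\<lambda>mu M. 0)
       \<and> wtmode T t 1 (vvec T g k) = (\<lambda>mu M. complex_of_real k * vvec T g k mu M)"
proof -
  interpret L: latsetup "amb T" "lat T" g k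
    apply unfold_locales
    using lat_add[OF assms(1)] lat_neg[OF assms(1)] lat_ip_int[OF assms(1)] assms(2,5)
    by (auto simp: dual_def)
  have vv: "vvec T g k = L.F" by (simp add: vvec_def L.F_def)
  have Psub: "posroots T t \<subseteq> roots (amb T) (lat T)" by (auto simp: posroots_def)
  have rs: "\<forall>c\<in>coset g (lat T). (\<Sum>a\<in>posroots T t. (ip (amb T) a c)^2) = real (cox T) * ip (amb T) c c"
  proof
    fix c assume "c \<in> coset g (lat T)"
    then show "(\<Sum>a\<in>posroots T t. (ip (amb T) a c)^2) = real (cox T) * ip (amb T) c c"
      using posroots_half[OF assms(1,3), of c] root_sum[OF assms(1,2), of c] by simp
  qed
  have hpos: "real (cox T) > 0" using cox_pos[OF assms(1)] by simp
  have s2: "smode T t j L.F = (\<lambda>mu M. 0)" if j: "j \<ge> 2" for j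
  proof -
    have "\<And>a mu M. a \<in> posroots T t \<Longrightarrow> hsq (amb T) a j L.F mu M
        - 2 * (emode (amb T) (vscale (sqrt 2) a) j L.F mu M + emode (amb T) (vscale (- sqrt 2) a) j L.F mu M) = 0"
      using Psub j by (auto simp: hsq_ge2[OF L.F_good] L.emode_F_ge2 vscale_neg L.roots_neg)
    then show ?thesis by (simp add: smode_def fun_eq_iff)
  qed
  have o2: "omode T t j L.F = (\<lambda>mu M. 0)" if j: "j \<ge> 2" for j
    using j by (simp add: omode_def fun_eq_iff hsq_ge2[OF L.F_good])
  have s1: "smode T t 1 L.F = (\<lambda>mu M. 0)"
  proof -
    have "\<And>a mu M. a \<in> posroots T t \<Longrightarrow> hsq (amb T) a 1 L.F mu M
        - 2 * (emode (amb T) (vscale (sqrt 2) a) 1 L.F mu M + emode (amb T) (vscale (- sqrt 2) a) 1 L.F mu M) = 0"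
      using Psub L.summand_zero by blast
    then show ?thesis by (simp add: smode_def fun_eq_iff)
  qed
  have o1: "omode T t 1 L.F = (\<lambda>mu M. complex_of_real k * L.F mu M)"
  proof (rule ext, rule ext)
    fix mu M
    have "omode T t 1 L.F mu M = (1 / (2 * of_nat (cox T))) * (complex_of_real (2 * real (cox T) * k) * L.F mu M)"
      unfolding omode_def using L.omode_sum[OF Psub rs] by simp
    also have "\<dots> = complex_of_real k * L.F mu M" using hpos by (simp add: field_simps)
    finally show "omode T t 1 L.F mu M = complex_of_real k * L.F mu M" .
  qed
  show ?thesis unfolding vv
    using s2 o2 s1 o1 by (simp add: wtmode_def fun_eq_iff)
qed


end
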